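(* For all integers $n\ge 2$, $1\le r\le n$ and $0\le k\le n-2$, $$N_k^{n,r}=\frac{2(k+1)}{r}\sum_{i}(-1)^i\frac{\binom{k}{i}\binom{k-i}{i}\binom{n-i-2}{r-1}\binom{n-i-1}{r-i-1}}{\binom{n-i-2}{i}},$$ where the sum runs over all integers $i$ with $0\le i\le k/2$.
   Context: A lattice path from $(0,0)$ to $(r,n-r)$ (with integers $n\ge 1$, $0\le r\le n$) is a sequence of lattice points $v_0=(0,0),v_1,\dots,v_n=(r,n-r)$ with each step $v_i-v_{i-1}\in\{(1,0),(0,1)\}$ (an E step or an N step); its vertex set is $\{v_0,\dots,v_n\}$. For $k\ge 0$, $N_k^{n,r}$ denotes the number of ordered pairs $(P,Q)$ of lattice paths from $(0,0)$ to $(r,n-r)$ such that the intersection of their vertex sets, with the two points $(0,0)$ and $(r,n-r)$ removed, has exactly $k$ elements. Binomial coefficients $\binom{a}{b}$ with $a\ge 0$ are $0$ if $b<0$ or $b>a$. *)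

theory Defs
  imports Complex_Main
begin

definition lattice_path :: "nat \<Rightarrow> nat \<Rightarrow> (int \<times> int) list \<Rightarrow> bool" where
  "lattice_path n r P \<longleftrightarrow>
     length P = n + 1 \<and> P ! 0 = (0, 0) \<and> P ! n = (int r, int n - int r) \<and>
     (\<forall>i<n. (fst (P ! Suc i) - fst (P ! i), snd (P ! Suc i) - snd (P ! i)) \<in> {(1, 0), (0, 1)})"

definition N_paths :: "nat \<Rightarrow> nat \<Rightarrow> nat \<Rightarrow> nat" where
  "N_paths k n r = card {(P, Q). lattice_path n r P \<and> lattice_path n r Q \<and>
      card ((set P \<inter> set Q) - {(0, 0), (int r, int n - int r)}) = k}"

definition binom :: "int \<Rightarrow> int \<Rightarrow> real" where
  "binom a b = (if b < 0 \<or> b > a then 0 else real (nat a choose nat b))"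

end

theory Submission
  imports Defs "HOL-Computational_Algebra.Formal_Power_Series" "HOL-Computational_Algebra.Polynomial"
begin

unbundle fps_syntax


definition rf :: "int \<Rightarrow> real" where
  "rf x = (if x < 0 then 0 else 1 / fact (nat x))"

definition nf :: "int \<Rightarrow> real" where
  "nf x = fact (nat x)"

lemma rf_pred: "rf (x - 1) = of_int x * rf x"
proof (cases "x \<le> 0")
  case True
  then show ?thesis
    by (cases "x = 0") (auto simp: rf_def)
next
  case False
  then have "nat x = Suc (nat (x - 1))" by simp
  then show ?thesis using False
    by (auto simp: rf_def field_simps)
qed

lemma nf_suc: "x \<ge> 0 \<Longrightarrow> nf (x + 1) = of_int (x + 1) * nf x"
proof -
  assume "x \<ge> 0"
  then have "nat (x + 1) = Suc (nat x)" by simp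
  then show ?thesis using \<open>x \<ge> 0\<close> by (simp add: nf_def)
qed

lemma rf_nf: "x \<ge> 0 \<Longrightarrow> rf x * nf x = 1"
  by (simp add: rf_def nf_def)


lemma rf_pred': "y = x - 1 \<Longrightarrow> rf y = of_int x * rf x"
  using rf_pred by simp

lemma nf_suc': "y = x + 1 \<Longrightarrow> x \<ge> 0 \<Longrightarrow> nf y = of_int y * nf x"
  using nf_suc by simp

lemma lin9:
  fixes c1 c2 c3 c4 c5 c6 c7 p1 p2 p3 p4 p5 p6 p7 q1 q2 d1 d2 :: int and X :: real
  assumes "c1*p1 - c2*p2 + c3*p3 + c4*p4 - c5*p5 + c6*p6 - c7*p7 = - (d1*q1) - (d2*q2)"
  shows "of_int c1 * (of_int p1 * X) - of_int c2 * (of_int p2 * X) + of_int c3 * (of_int p3 * X)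
    + of_int c4 * (of_int p4 * X) - of_int c5 * (of_int p5 * X) + of_int c6 * (of_int p6 * X)
    - of_int c7 * (of_int p7 * X) = - (of_int d1 * (of_int q1 * X)) - (of_int d2 * (of_int q2 * X))"
proof -
  have "real_of_int (c1*p1 - c2*p2 + c3*p3 + c4*p4 - c5*p5 + c6*p6 - c7*p7) = of_int (- (d1*q1) - (d2*q2))"
    using assms by simp
  then have "(real_of_int (c1*p1 - c2*p2 + c3*p3 + c4*p4 - c5*p5 + c6*p6 - c7*p7)) * X = of_int (- (d1*q1) - (d2*q2)) * X"
    by simp
  then show ?thesis by (simp add: algebra_simps)
qed

lemma cert_poly:
  fixes i n r k :: int
  shows "((k+3)*(k+2))*((n-i-1)*(n-i-2)*(n-2*i-2)*(n-2*i-3))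
       - (2*(k+2))*((n-i-1)*(n-i-2)*(n-2*i-2)*(n-2*i-3)*(k+2-2*i))
       + (2*(n-r))*((n-i-2)*(n-2*i-3)*(k+1-2*i)*(k+2-2*i)*(n-r-i-1))
       + (2*r)*((n-i-2)*(n-2*i-3)*(k+1-2*i)*(k+2-2*i)*(r-i-1))
       - ((n-r)*(n-r-1))*((k+1-2*i)*(k+2-2*i)*(n-r-i-2)*(n-r-i-1))
       + (2*r*(n-r))*((k+1-2*i)*(k+2-2*i)*(r-i-1)*(n-r-i-1))
       - (r*(r-1))*((k+1-2*i)*(k+2-2*i)*(r-i-2)*(r-i-1))
     = - ((4*(i+1)^2 - (4*n-6)*(i+1) - 2*(n-1)) * ((k+1-2*i)*(k+2-2*i)*(r-i-1)*(n-r-i-1)))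
       - ((4*i^2 - (4*n-6)*i - 2*(n-1)) * ((n-i-2)*(n-2*i-2)*(n-2*i-3)*i))"
  by algebra

lemma cert_generic:
  fixes i n r k :: int
  assumes "i \<ge> 0" "n - 2*i - 4 \<ge> 0"
  shows "of_int ((k+3)*(k+2))*(nf(n-i-1)*nf(n-2*i-2)*rf i*rf(k+2-2*i)*rf(r-i-1)*rf(n-r-i-1))
       - of_int (2*(k+2))*(nf(n-i-1)*nf(n-2*i-2)*rf i*rf(k+1-2*i)*rf(r-i-1)*rf(n-r-i-1))
       + of_int (2*(n-r))*(nf(n-i-2)*nf(n-2*i-3)*rf i*rf(k-2*i)*rf(r-i-1)*rf(n-r-i-2))
       + of_int (2*r)*(nf(n-i-2)*nf(n-2*i-3)*rf i*rf(k-2*i)*rf(r-i-2)*rf(n-r-i-1))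
       - of_int ((n-r)*(n-r-1))*(nf(n-i-3)*nf(n-2*i-4)*rf i*rf(k-2*i)*rf(r-i-1)*rf(n-r-i-3))
       + of_int (2*r*(n-r))*(nf(n-i-3)*nf(n-2*i-4)*rf i*rf(k-2*i)*rf(r-i-2)*rf(n-r-i-2))
       - of_int (r*(r-1))*(nf(n-i-3)*nf(n-2*i-4)*rf i*rf(k-2*i)*rf(r-i-3)*rf(n-r-i-1))
     = - (of_int (4*(i+1)^2 - (4*n-6)*(i+1) - 2*(n-1)) * (nf(n-i-3)*nf(n-2*i-4)*rf i*rf(k-2*i)*rf(r-i-2)*rf(n-r-i-2)))
       - (of_int (4*i^2 - (4*n-6)*i - 2*(n-1)) * (nf(n-i-2)*nf(n-2*i-2)*rf(i-1)*rf(k+2-2*i)*rf(r-i-1)*rf(n-r-i-1)))"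
proof -
  have k1: "rf (k+1-2*i) = of_int (k+2-2*i) * rf (k+2-2*i)" by (rule rf_pred') simp
  have k0: "rf (k-2*i) = of_int ((k+1-2*i)*(k+2-2*i)) * rf (k+2-2*i)"
    using rf_pred'[of "k-2*i" "k+1-2*i"] k1 by simp
  have i0: "rf (i-1) = of_int i * rf i" by (rule rf_pred') simp
  have r2: "rf (r-i-2) = of_int (r-i-1) * rf (r-i-1)" by (rule rf_pred') simp
  have r3: "rf (r-i-3) = of_int ((r-i-2)*(r-i-1)) * rf (r-i-1)"
    using rf_pred'[of "r-i-3" "r-i-2"] r2 by simp
  have m2: "rf (n-r-i-2) = of_int (n-r-i-1) * rf (n-r-i-1)" by (rule rf_pred') simp
  have m3: "rf (n-r-i-3) = of_int ((n-r-i-2)*(n-r-i-1)) * rf (n-r-i-1)"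
    using rf_pred'[of "n-r-i-3" "n-r-i-2"] m2 by simp
  have a2: "nf (n-i-2) = of_int (n-i-2) * nf (n-i-3)" by (rule nf_suc') (use assms in auto)
  have a1: "nf (n-i-1) = of_int ((n-i-1)*(n-i-2)) * nf (n-i-3)"
    using nf_suc'[of "n-i-1" "n-i-2"] a2 assms by simp
  have b2: "nf (n-2*i-3) = of_int (n-2*i-3) * nf (n-2*i-4)" by (rule nf_suc') (use assms in auto)
  have b1: "nf (n-2*i-2) = of_int ((n-2*i-2)*(n-2*i-3)) * nf (n-2*i-4)"
    using nf_suc'[of "n-2*i-2" "n-2*i-3"] b2 assms by simp
  define X where "X = nf (n-i-3) * nf (n-2*i-4) * rf i * rf (k+2-2*i) * rf (r-i-1) * rf (n-r-i-1)"
  have t1: "nf(n-i-1)*nf(n-2*i-2)*rf i*rf(k+2-2*i)*rf(r-i-1)*rf(n-r-i-1)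
     = of_int ((n-i-1)*(n-i-2)*(n-2*i-2)*(n-2*i-3)) * X"
    unfolding a1 b1 X_def by (simp only: of_int_mult mult_ac)
  have t2: "nf(n-i-1)*nf(n-2*i-2)*rf i*rf(k+1-2*i)*rf(r-i-1)*rf(n-r-i-1)
     = of_int ((n-i-1)*(n-i-2)*(n-2*i-2)*(n-2*i-3)*(k+2-2*i)) * X"
    unfolding a1 b1 k1 X_def by (simp only: of_int_mult mult_ac)
  have t3: "nf(n-i-2)*nf(n-2*i-3)*rf i*rf(k-2*i)*rf(r-i-1)*rf(n-r-i-2)
     = of_int ((n-i-2)*(n-2*i-3)*(k+1-2*i)*(k+2-2*i)*(n-r-i-1)) * X"
    unfolding a2 b2 k0 m2 X_def by (simp only: of_int_mult mult_ac)
  have t4: "nf(n-i-2)*nf(n-2*i-3)*rf i*rf(k-2*i)*rf(r-i-2)*rf(n-r-i-1)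
     = of_int ((n-i-2)*(n-2*i-3)*(k+1-2*i)*(k+2-2*i)*(r-i-1)) * X"
    unfolding a2 b2 k0 r2 X_def by (simp only: of_int_mult mult_ac)
  have t5: "nf(n-i-3)*nf(n-2*i-4)*rf i*rf(k-2*i)*rf(r-i-1)*rf(n-r-i-3)
     = of_int ((k+1-2*i)*(k+2-2*i)*(n-r-i-2)*(n-r-i-1)) * X"
    unfolding k0 m3 X_def by (simp only: of_int_mult mult_ac)
  have t6: "nf(n-i-3)*nf(n-2*i-4)*rf i*rf(k-2*i)*rf(r-i-2)*rf(n-r-i-2)
     = of_int ((k+1-2*i)*(k+2-2*i)*(r-i-1)*(n-r-i-1)) * X"
    unfolding k0 r2 m2 X_def by (simp only: of_int_mult mult_ac)
  have t7: "nf(n-i-3)*nf(n-2*i-4)*rf i*rf(k-2*i)*rf(r-i-3)*rf(n-r-i-1)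
     = of_int ((k+1-2*i)*(k+2-2*i)*(r-i-2)*(r-i-1)) * X"
    unfolding k0 r3 X_def by (simp only: of_int_mult mult_ac)
  have t9: "nf(n-i-2)*nf(n-2*i-2)*rf(i-1)*rf(k+2-2*i)*rf(r-i-1)*rf(n-r-i-1)
     = of_int ((n-i-2)*(n-2*i-2)*(n-2*i-3)*i) * X"
    unfolding a2 b1 i0 X_def by (simp only: of_int_mult mult_ac)
  show ?thesis
    unfolding t9 t1 t2 t3 t4 t5 t6 t7
    by (rule lin9) (rule cert_poly)
qed


definition Aterm :: "nat \<Rightarrow> int \<Rightarrow> int \<Rightarrow> nat \<Rightarrow> real" where
  "Aterm k n r i = (-1)^i * (nf (n - int i - 1) * nf (n - 2*int i - 2) * rf (int i) *
     rf (int k - 2*int i) * rf (r - int i - 1) * rf (n - r - int i - 1))"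

definition uu :: "int \<Rightarrow> int \<Rightarrow> int" where
  "uu n j = 4*j^2 - (4*n-6)*j - 2*(n-1)"

definition gt :: "nat \<Rightarrow> int \<Rightarrow> int \<Rightarrow> nat \<Rightarrow> real" where
  "gt k n r i = (-1)^i * (of_int (uu n (int i)) * (nf (n - int i - 2) * nf (n - 2*int i - 2) *
     rf (int i - 1) * rf (int k + 2 - 2*int i) * rf (r - int i - 1) * rf (n - r - int i - 1)))"

lemma cert_edge:
  fixes i n r k :: int
  assumes "i \<ge> 0" "n - 2*i - 2 \<ge> 0" "k - 2*i < 0"
  shows "of_int ((k+3)*(k+2))*(nf(n-i-1)*nf(n-2*i-2)*rf i*rf(k+2-2*i)*rf(r-i-1)*rf(n-r-i-1))
       - of_int (2*(k+2))*(nf(n-i-1)*nf(n-2*i-2)*rf i*rf(k+1-2*i)*rf(r-i-1)*rf(n-r-i-1))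
     = - (of_int (4*i^2 - (4*n-6)*i - 2*(n-1)) * (nf(n-i-2)*nf(n-2*i-2)*rf(i-1)*rf(k+2-2*i)*rf(r-i-1)*rf(n-r-i-1)))"
proof -
  have k1: "rf (k+1-2*i) = of_int (k+2-2*i) * rf (k+2-2*i)" by (rule rf_pred') simp
  have i0: "rf (i-1) = of_int i * rf i" by (rule rf_pred') simp
  have a2: "nf (n-i-1) = of_int (n-i-1) * nf (n-i-2)" by (rule nf_suc') (use assms in auto)
  define Y where "Y = nf (n-i-2) * nf (n-2*i-2) * rf i * rf (k+2-2*i) * rf (r-i-1) * rf (n-r-i-1)"
  have t1: "nf(n-i-1)*nf(n-2*i-2)*rf i*rf(k+2-2*i)*rf(r-i-1)*rf(n-r-i-1) = of_int (n-i-1) * Y"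
    unfolding a2 Y_def by (simp only: of_int_mult mult_ac)
  have t2: "nf(n-i-1)*nf(n-2*i-2)*rf i*rf(k+1-2*i)*rf(r-i-1)*rf(n-r-i-1) = of_int ((n-i-1)*(k+2-2*i)) * Y"
    unfolding a2 k1 Y_def by (simp only: of_int_mult mult_ac)
  have t3: "nf(n-i-2)*nf(n-2*i-2)*rf(i-1)*rf(k+2-2*i)*rf(r-i-1)*rf(n-r-i-1) = of_int i * Y"
    unfolding i0 Y_def by (simp only: of_int_mult mult_ac)
  consider "k = 2*i - 1" | "k = 2*i - 2" | "k + 2 - 2*i < 0" using assms by linarith
  then show ?thesis
  proof cases
    case 1
    have "(k+3)*(k+2)*(n-i-1) - 2*(k+2)*((n-i-1)*(k+2-2*i)) = - ((4*i^2 - (4*n-6)*i - 2*(n-1)) * i)"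
      unfolding 1 by algebra
    then have "real_of_int ((k+3)*(k+2)*(n-i-1) - 2*(k+2)*((n-i-1)*(k+2-2*i))) * Y
       = real_of_int (- ((4*i^2 - (4*n-6)*i - 2*(n-1)) * i)) * Y" by simp
    then show ?thesis unfolding t1 t2 t3 by (simp add: algebra_simps)
  next
    case 2
    have "(k+3)*(k+2)*(n-i-1) - 2*(k+2)*((n-i-1)*(k+2-2*i)) = - ((4*i^2 - (4*n-6)*i - 2*(n-1)) * i)"
      unfolding 2 by algebra
    then have "real_of_int ((k+3)*(k+2)*(n-i-1) - 2*(k+2)*((n-i-1)*(k+2-2*i))) * Y
       = real_of_int (- ((4*i^2 - (4*n-6)*i - 2*(n-1)) * i)) * Y" by simp
    then show ?thesis unfolding t1 t2 t3 by (simp add: algebra_simps)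
  next
    case 3
    then have "Y = 0" by (simp add: Y_def rf_def)
    then show ?thesis unfolding t1 t2 t3 by simp
  qed
qed

lemma sl7:
  fixes c1 c2 c3 c4 c5 c6 c7 d1 d2 T1 T2 T3 T4 T5 T6 T7 T8 T9 s :: real
  assumes "c1*T1 - c2*T2 + c3*T3 + c4*T4 - c5*T5 + c6*T6 - c7*T7 = -(d1*T8) - (d2*T9)"
  shows "c1*(s*T1) - c2*(s*T2) + c3*(s*T3) + c4*(s*T4) - c5*(s*T5) + c6*(s*T6) - c7*(s*T7)
    = - (s*(d1*T8)) - s*(d2*T9)"
proof -
  have "s*(c1*T1 - c2*T2 + c3*T3 + c4*T4 - c5*T5 + c6*T6 - c7*T7) = s*(-(d1*T8) - (d2*T9))"
    using assms by simp
  then show ?thesis by (simp add: algebra_simps)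
qed

lemma sl2:
  fixes c1 c2 d2 T1 T2 T9 s :: real
  assumes "c1*T1 - c2*T2 = -(d2*T9)"
  shows "c1*(s*T1) - c2*(s*T2) = - (s*(d2*T9))"
proof -
  have "s*(c1*T1 - c2*T2) = s*(-(d2*T9))"
    using assms by simp
  then show ?thesis by (simp add: algebra_simps)
qed

lemma rf_neg: "x < 0 \<Longrightarrow> rf x = 0" by (simp add: rf_def)

lemma cert_i:
  fixes n r :: int and k i :: nat
  assumes "int k + 4 \<le> n" "2*i \<le> k + 2"
  shows "of_int ((int k+3)*(int k+2)) * Aterm (k+2) n r i - of_int (2*(int k+2)) * Aterm (k+1) n r i
     + of_int (2*(n-r)) * Aterm k (n-1) r i + of_int (2*r) * Aterm k (n-1) (r-1) i
     - of_int ((n-r)*(n-r-1)) * Aterm k (n-2) r i + of_int (2*r*(n-r)) * Aterm k (n-2) (r-1) i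
     - of_int (r*(r-1)) * Aterm k (n-2) (r-2) i
     = gt k n r (Suc i) - gt k n r i"
proof -
  define I where "I = int i"
  define K where "K = int k"
  have I0: "I \<ge> 0" by (simp add: I_def)
  have e1: "Aterm (k+2) n r i = (-1)^i * (nf(n-I-1)*nf(n-2*I-2)*rf I*rf(K+2-2*I)*rf(r-I-1)*rf(n-r-I-1))"
    by (simp add: Aterm_def I_def K_def algebra_simps)
  have e2: "Aterm (k+1) n r i = (-1)^i * (nf(n-I-1)*nf(n-2*I-2)*rf I*rf(K+1-2*I)*rf(r-I-1)*rf(n-r-I-1))"
    by (simp add: Aterm_def I_def K_def algebra_simps)
  have e3: "Aterm k (n-1) r i = (-1)^i * (nf(n-I-2)*nf(n-2*I-3)*rf I*rf(K-2*I)*rf(r-I-1)*rf(n-r-I-2))"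
    by (simp add: Aterm_def I_def K_def algebra_simps)
  have e4: "Aterm k (n-1) (r-1) i = (-1)^i * (nf(n-I-2)*nf(n-2*I-3)*rf I*rf(K-2*I)*rf(r-I-2)*rf(n-r-I-1))"
    by (simp add: Aterm_def I_def K_def algebra_simps)
  have e5: "Aterm k (n-2) r i = (-1)^i * (nf(n-I-3)*nf(n-2*I-4)*rf I*rf(K-2*I)*rf(r-I-1)*rf(n-r-I-3))"
    by (simp add: Aterm_def I_def K_def algebra_simps)
  have e6: "Aterm k (n-2) (r-1) i = (-1)^i * (nf(n-I-3)*nf(n-2*I-4)*rf I*rf(K-2*I)*rf(r-I-2)*rf(n-r-I-2))"
    by (simp add: Aterm_def I_def K_def algebra_simps)
  have e7: "Aterm k (n-2) (r-2) i = (-1)^i * (nf(n-I-3)*nf(n-2*I-4)*rf I*rf(K-2*I)*rf(r-I-3)*rf(n-r-I-1))"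
    by (simp add: Aterm_def I_def K_def algebra_simps)
  have e8: "gt k n r (Suc i) = - ((-1)^i * (of_int (4*(I+1)^2 - (4*n-6)*(I+1) - 2*(n-1)) * (nf(n-I-3)*nf(n-2*I-4)*rf I*rf(K-2*I)*rf(r-I-2)*rf(n-r-I-2))))"
    by (simp add: gt_def uu_def I_def K_def algebra_simps)
  have e9: "gt k n r i = (-1)^i * (of_int (4*I^2 - (4*n-6)*I - 2*(n-1)) * (nf(n-I-2)*nf(n-2*I-2)*rf(I-1)*rf(K+2-2*I)*rf(r-I-1)*rf(n-r-I-1)))"
    by (simp add: gt_def uu_def I_def K_def algebra_simps)
  show ?thesis
  proof (cases "n - 2*I - 4 \<ge> 0")
    case True
    from cert_generic[OF I0 True, of K r]
    show ?thesis unfolding e1 e2 e3 e4 e5 e6 e7 e8 e9 K_def[symmetric]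
      by (rule sl7)
  next
    case False
    have "n - 2*I - 2 \<ge> 0" using assms by (simp add: I_def)
    moreover have "K - 2*I < 0" using False assms by (simp add: I_def K_def)
    ultimately have ce: "of_int ((K+3)*(K+2))*(nf(n-I-1)*nf(n-2*I-2)*rf I*rf(K+2-2*I)*rf(r-I-1)*rf(n-r-I-1))
       - of_int (2*(K+2))*(nf(n-I-1)*nf(n-2*I-2)*rf I*rf(K+1-2*I)*rf(r-I-1)*rf(n-r-I-1))
     = - (of_int (4*I^2 - (4*n-6)*I - 2*(n-1)) * (nf(n-I-2)*nf(n-2*I-2)*rf(I-1)*rf(K+2-2*I)*rf(r-I-1)*rf(n-r-I-1)))"
      using cert_edge[OF I0] by blast
    have z: "rf (K-2*I) = 0" by (rule rf_neg) fact
    show ?thesis unfolding e1 e2 e3 e4 e5 e6 e7 e8 e9 z K_def[symmetric]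
      using sl2[OF ce, of "(-1)^i"] by simp
  qed
qed


definition Sk :: "nat \<Rightarrow> int \<Rightarrow> int \<Rightarrow> real" where
  "Sk k n r = (\<Sum>i=0..k div 2. Aterm k n r i)"

definition Fx :: "nat \<Rightarrow> int \<Rightarrow> int \<Rightarrow> real" where
  "Fx k n r = 2 * fact (k+1) * rf r * rf (n - r) * Sk k n r"

lemma Aterm_zero: "k < 2*i \<Longrightarrow> Aterm k n r i = 0"
  by (simp add: Aterm_def rf_def)

lemma Sk_ext: "k div 2 \<le> M \<Longrightarrow> Sk k n r = (\<Sum>i=0..M. Aterm k n r i)"
  unfolding Sk_def
  by (rule sum.mono_neutral_left) (auto intro: Aterm_zero)

lemma gt_zero0: "gt k n r 0 = 0"
  by (simp add: gt_def rf_def)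

lemma gt_zero_top: "k + 2 < 2*i \<Longrightarrow> gt k n r i = 0"
  by (simp add: gt_def rf_def)

lemma Sk_rec:
  fixes n r :: int and k :: nat
  assumes "int k + 4 \<le> n"
  shows "of_int ((int k+3)*(int k+2)) * Sk (k+2) n r - of_int (2*(int k+2)) * Sk (k+1) n r
     + of_int (2*(n-r)) * Sk k (n-1) r + of_int (2*r) * Sk k (n-1) (r-1)
     - of_int ((n-r)*(n-r-1)) * Sk k (n-2) r + of_int (2*r*(n-r)) * Sk k (n-2) (r-1)
     - of_int (r*(r-1)) * Sk k (n-2) (r-2) = 0"
proof -
  define M where "M = (k+2) div 2"
  have m1: "(k+2) div 2 \<le> M" "(k+1) div 2 \<le> M" "k div 2 \<le> M" by (auto simp: M_def)
  have "(\<Sum>i=0..M. of_int ((int k+3)*(int k+2)) * Aterm (k+2) n r i - of_int (2*(int k+2)) * Aterm (k+1) n r i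
     + of_int (2*(n-r)) * Aterm k (n-1) r i + of_int (2*r) * Aterm k (n-1) (r-1) i
     - of_int ((n-r)*(n-r-1)) * Aterm k (n-2) r i + of_int (2*r*(n-r)) * Aterm k (n-2) (r-1) i
     - of_int (r*(r-1)) * Aterm k (n-2) (r-2) i) = (\<Sum>i=0..M. gt k n r (Suc i) - gt k n r i)"
    by (rule sum.cong[OF refl], rule cert_i) (use assms in \<open>auto simp: M_def\<close>)
  also have "\<dots> = gt k n r (Suc M) - gt k n r 0"
    by (rule sum_Suc_diff) simp
  also have "\<dots> = 0"
    by (simp add: gt_zero0 gt_zero_top M_def)
  finally show ?thesis
    unfolding Sk_ext[OF m1(1)] Sk_ext[OF m1(2)] Sk_ext[OF m1(3)]
    by (simp add: sum.distrib sum_subtractf sum_distrib_left)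
qed

lemma Fx_rec:
  fixes n r :: int and k :: nat
  assumes "int k + 4 \<le> n"
  shows "Fx (k+2) n r = 2 * Fx (k+1) n r - 2 * Fx k (n-1) r - 2 * Fx k (n-1) (r-1)
     + Fx k (n-2) r - 2 * Fx k (n-2) (r-1) + Fx k (n-2) (r-2)"
proof -
  define \<Phi> where "\<Phi> = 2 * fact (k+1) * rf r * rf (n - r)"
  have f1: "Fx (k+2) n r = \<Phi> * (of_int ((int k+3)*(int k+2)) * Sk (k+2) n r)"
    by (simp add: Fx_def \<Phi>_def fact_Suc algebra_simps)
  have f2: "Fx (k+1) n r = \<Phi> * (of_int (int k+2) * Sk (k+1) n r)"
    by (simp add: Fx_def \<Phi>_def fact_Suc algebra_simps)
  have q1: "rf (n-1-r) = of_int (n-r) * rf (n-r)" by (rule rf_pred') simp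
  have q2: "rf (r-1) = of_int r * rf r" by (rule rf_pred') simp
  have q3: "rf (n-2-r) = of_int ((n-r)*(n-r-1)) * rf (n-r)"
    using rf_pred'[of "n-2-r" "n-r-1"] rf_pred'[of "n-r-1" "n-r"] by simp
  have q4: "rf (n-2-(r-1)) = of_int (n-r) * rf (n-r)" by (rule rf_pred') simp
  have q5: "rf (r-2) = of_int (r*(r-1)) * rf r"
    using rf_pred'[of "r-2" "r-1"] rf_pred'[of "r-1" "r"] by simp
  have q6: "n-2-(r-2) = n - r" by simp
  have q7: "n-1-(r-1) = n - r" by simp
  have f3: "Fx k (n-1) r = \<Phi> * (of_int (n-r) * Sk k (n-1) r)"
    unfolding Fx_def \<Phi>_def q1 by (simp only: mult_ac)
  have f4: "Fx k (n-1) (r-1) = \<Phi> * (of_int r * Sk k (n-1) (r-1))"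
    unfolding Fx_def \<Phi>_def q2 q7 by (simp only: mult_ac)
  have f5: "Fx k (n-2) r = \<Phi> * (of_int ((n-r)*(n-r-1)) * Sk k (n-2) r)"
    unfolding Fx_def \<Phi>_def q3 by (simp only: mult_ac)
  have f6: "Fx k (n-2) (r-1) = \<Phi> * (of_int (r*(n-r)) * Sk k (n-2) (r-1))"
    unfolding Fx_def \<Phi>_def q2 q4 by (simp only: mult_ac of_int_mult)
  have f7: "Fx k (n-2) (r-2) = \<Phi> * (of_int (r*(r-1)) * Sk k (n-2) (r-2))"
    unfolding Fx_def \<Phi>_def q5 q6 by (simp only: mult_ac)
  have "\<Phi> * (of_int ((int k+3)*(int k+2)) * Sk (k+2) n r - of_int (2*(int k+2)) * Sk (k+1) n r
     + of_int (2*(n-r)) * Sk k (n-1) r + of_int (2*r) * Sk k (n-1) (r-1)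
     - of_int ((n-r)*(n-r-1)) * Sk k (n-2) r + of_int (2*r*(n-r)) * Sk k (n-2) (r-1)
     - of_int (r*(r-1)) * Sk k (n-2) (r-2)) = 0"
    using Sk_rec[OF assms] by simp
  then show ?thesis
    unfolding f1 f2 f3 f4 f5 f6 f7 by (simp add: algebra_simps)
qed


definition Bn :: "int \<Rightarrow> int \<Rightarrow> real" where
  "Bn n r = nf n * rf r * rf (n - r)"

lemma sl_leg:
  fixes c0 c1 c2 c3 c4 c5 c6 p0 p1 p2 p3 p4 p5 p6 :: int and X :: real
  assumes "c0*p0 = c1*(p1 + p2) - c3*(p3 - 2*p4 + p5)"
  shows "of_int c0 * (of_int p0 * X) = of_int c1 * (of_int p1 * X + of_int p2 * X)
     - of_int c3 * (of_int p3 * X - 2 * (of_int p4 * X) + of_int p5 * X)"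
proof -
  have "real_of_int (c0*p0) * X = real_of_int (c1*(p1 + p2) - c3*(p3 - 2*p4 + p5)) * X"
    using assms by simp
  then show ?thesis by (simp add: algebra_simps)
qed

lemma legendre:
  fixes n r :: int
  assumes "n \<ge> 2"
  shows "of_int n * (Bn n r)^2 = of_int (2*n-1) * ((Bn (n-1) r)^2 + (Bn (n-1) (r-1))^2)
     - of_int (n-1) * ((Bn (n-2) r)^2 - 2 * (Bn (n-2) (r-1))^2 + (Bn (n-2) (r-2))^2)"
proof -
  have n1: "nf (n-1) = of_int (n-1) * nf (n-2)" by (rule nf_suc') (use assms in auto)
  have n0: "nf n = of_int (n*(n-1)) * nf (n-2)"
    using nf_suc'[of n "n-1"] n1 assms by simp
  have r1: "rf (r-1) = of_int r * rf r" by (rule rf_pred') simp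
  have r2: "rf (r-2) = of_int (r*(r-1)) * rf r"
    using rf_pred'[of "r-2" "r-1"] r1 by simp
  have m1: "rf (n-1-r) = of_int (n-r) * rf (n-r)" by (rule rf_pred') simp
  have m2: "rf (n-2-r) = of_int ((n-r)*(n-r-1)) * rf (n-r)"
    using rf_pred'[of "n-2-r" "n-r-1"] rf_pred'[of "n-r-1" "n-r"] by simp
  have m3: "n-1-(r-1) = n-r" "n-2-(r-2) = n - r" by simp_all
  have m4: "rf (n-2-(r-1)) = of_int (n-r) * rf (n-r)" by (rule rf_pred') simp
  define X where "X = (nf (n-2) * rf r * rf (n-r))^2"
  have t0: "(Bn n r)^2 = of_int ((n*(n-1))^2) * X"
    unfolding Bn_def n0 X_def by (simp add: power_mult_distrib)
  have t1: "(Bn (n-1) r)^2 = of_int (((n-1)*(n-r))^2) * X"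
    unfolding Bn_def n1 m1 X_def by (simp add: power_mult_distrib)
  have t2: "(Bn (n-1) (r-1))^2 = of_int (((n-1)*r)^2) * X"
    unfolding Bn_def n1 r1 m3 X_def by (simp add: power_mult_distrib)
  have t3: "(Bn (n-2) r)^2 = of_int (((n-r)*(n-r-1))^2) * X"
    unfolding Bn_def m2 X_def by (simp add: power_mult_distrib)
  have t4: "(Bn (n-2) (r-1))^2 = of_int ((r*(n-r))^2) * X"
    unfolding Bn_def r1 m4 X_def by (simp add: power_mult_distrib)
  have t5: "(Bn (n-2) (r-2))^2 = of_int ((r*(r-1))^2) * X"
    unfolding Bn_def r2 m3 X_def by (simp add: power_mult_distrib)
  have p: "n*((n*(n-1))^2) = (2*n-1)*(((n-1)*(n-r))^2 + ((n-1)*r)^2)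
     - (n-1)*(((n-r)*(n-r-1))^2 - 2*((r*(n-r))^2) + (r*(r-1))^2)"
    by algebra
  show ?thesis unfolding t0 t1 t2 t3 t4 t5
    by (rule sl_leg[OF p])
qed

definition g0 :: "int \<Rightarrow> int \<Rightarrow> real" where
  "g0 n r = rf r * rf (n - r) * nf (n - 1) * nf (n - 2) * rf (r - 1) * rf (n - r - 1)"

lemma Fx0: "Fx 0 n r = 2 * g0 n r"
  by (simp add: Fx_def Sk_def Aterm_def g0_def rf_def)

lemma Fx1: "Fx 1 n r = 2 * Fx 0 n r"
  by (simp add: Fx_def Sk_def Aterm_def rf_def)

lemma g0_rec:
  fixes n r :: int
  assumes "n \<ge> 4"
  shows "of_int n * g0 n r = of_int (2*n-3) * (g0 (n-1) r + g0 (n-1) (r-1))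
     - of_int (n-3) * (g0 (n-2) r - 2 * g0 (n-2) (r-1) + g0 (n-2) (r-2))"
proof -
  have a3: "nf (n-3) = of_int (n-3) * nf (n-4)" by (rule nf_suc') (use assms in auto)
  have a2: "nf (n-2) = of_int ((n-2)*(n-3)) * nf (n-4)"
    using nf_suc'[of "n-2" "n-3"] a3 assms by simp
  have a1: "nf (n-1) = of_int ((n-1)*(n-2)*(n-3)) * nf (n-4)"
    using nf_suc'[of "n-1" "n-2"] a2 assms by simp
  have b1: "nf (n-1-1) = of_int ((n-2)*(n-3)) * nf (n-4)" using a2 by simp
  have b2: "nf (n-1-2) = of_int (n-3) * nf (n-4)" using a3 by simp
  have b3: "nf (n-2-1) = of_int (n-3) * nf (n-4)" using a3 by simp
  have b4: "nf (n-2-2) = nf (n-4)" by simp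
  have r1: "rf (r-1) = of_int r * rf r" by (rule rf_pred') simp
  have r2: "rf (r-2) = of_int (r*(r-1)) * rf r"
    using rf_pred'[of "r-2" "r-1"] r1 by simp
  have r3: "rf (r-2-1) = of_int (r*(r-1)*(r-2)) * rf r"
    using rf_pred'[of "r-2-1" "r-2"] r2 by simp
  have r4: "rf (r-1-1) = of_int (r*(r-1)) * rf r" using r2 by simp
  have m1: "rf (n-r-1) = of_int (n-r) * rf (n-r)" by (rule rf_pred') simp
  have m2: "rf (n-r-2) = of_int ((n-r)*(n-r-1)) * rf (n-r)"
    using rf_pred'[of "n-r-2" "n-r-1"] m1 by simp
  have m3: "rf (n-r-3) = of_int ((n-r)*(n-r-1)*(n-r-2)) * rf (n-r)"
    using rf_pred'[of "n-r-3" "n-r-2"] m2 by simp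
  have s1: "n-1-r = n-r-1" "n-1-r-1 = n-r-2" "n-1-(r-1) = n-r" "n-1-(r-1)-1 = n-r-1"
    "n-2-r = n-r-2" "n-2-r-1 = n-r-3" "n-2-(r-1) = n-r-1" "n-2-(r-1)-1 = n-r-2"
    "n-2-(r-2) = n-r" "n-2-(r-2)-1 = n-r-1" "n-r-1-1 = n-r-2" "n-r-2-1 = n-r-3" by simp_all
  define X where "X = (nf (n-4) * rf r * rf (n-r))^2"
  have t0: "g0 n r = of_int (r*(n-r)*(n-1)*(n-2)^2*(n-3)^2) * X"
    unfolding g0_def a1 a2 r1 m1 X_def by (simp add: power2_eq_square mult_ac)
  have t1: "g0 (n-1) r = of_int (r*(n-r)^2*(n-r-1)*(n-2)*(n-3)^2) * X"
    unfolding g0_def s1 b1 b2 r1 m1 m2 X_def by (simp add: power2_eq_square mult_ac)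
  have t2: "g0 (n-1) (r-1) = of_int (r^2*(r-1)*(n-r)*(n-2)*(n-3)^2) * X"
    unfolding g0_def s1 b1 b2 r1 r4 m1 X_def by (simp add: power2_eq_square mult_ac)
  have t3: "g0 (n-2) r = of_int (r*(n-r)^2*(n-r-1)^2*(n-r-2)*(n-3)) * X"
    unfolding g0_def s1 b3 b4 r1 m2 m3 X_def by (simp add: power2_eq_square mult_ac)
  have t4: "g0 (n-2) (r-1) = of_int (r^2*(r-1)*(n-r)^2*(n-r-1)*(n-3)) * X"
    unfolding g0_def s1 b3 b4 r1 r4 m1 m2 X_def by (simp add: power2_eq_square mult_ac)
  have t5: "g0 (n-2) (r-2) = of_int (r^2*(r-1)^2*(r-2)*(n-r)*(n-3)) * X"
    unfolding g0_def s1 b3 b4 r2 r3 m1 X_def by (simp add: power2_eq_square mult_ac)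
  have p: "n*(r*(n-r)*(n-1)*(n-2)^2*(n-3)^2) = (2*n-3)*((r*(n-r)^2*(n-r-1)*(n-2)*(n-3)^2) + (r^2*(r-1)*(n-r)*(n-2)*(n-3)^2))
     - (n-3)*((r*(n-r)^2*(n-r-1)^2*(n-r-2)*(n-3)) - 2*(r^2*(r-1)*(n-r)^2*(n-r-1)*(n-3)) + (r^2*(r-1)^2*(r-2)*(n-r)*(n-3)))"
    by algebra
  show ?thesis unfolding t0 t1 t2 t3 t4 t5
    by (rule sl_leg[OF p])
qed


type_synonym stp = "bool \<times> bool"

definition cf :: "stp list \<Rightarrow> nat" where "cf xs = length (filter fst xs)"
definition cs :: "stp list \<Rightarrow> nat" where "cs xs = length (filter snd xs)"
definition zat :: "stp list \<Rightarrow> nat \<Rightarrow> bool" where "zat xs t \<longleftrightarrow> cf (take t xs) = cs (take t xs)"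
definition Zc :: "stp list \<Rightarrow> nat" where "Zc xs = card {t \<in> {1..<length xs}. zat xs t}"
definition Ev :: "nat \<Rightarrow> stp list set" where "Ev n = {xs. length xs = n \<and> cf xs = cs xs}"
definition Pr :: "nat \<Rightarrow> stp list set" where "Pr n = {xs \<in> Ev n. Zc xs = 0}"

lemma cf_append[simp]: "cf (xs @ ys) = cf xs + cf ys" by (simp add: cf_def)
lemma cs_append[simp]: "cs (xs @ ys) = cs xs + cs ys" by (simp add: cs_def)

lemma finite_Ev: "finite (Ev n)"
proof -
  have "Ev n \<subseteq> {xs. set xs \<subseteq> UNIV \<and> length xs = n}" by (auto simp: Ev_def)
  moreover have "finite {xs::stp list. set xs \<subseteq> UNIV \<and> length xs = n}"
    by (rule finite_lists_length_eq) simp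
  ultimately show ?thesis by (rule finite_subset)
qed

lemma finite_Pr: "finite (Pr n)"
  using finite_Ev by (simp add: Pr_def)

lemma zat_append_ge:
  assumes "cf p = cs p" "length p \<le> t"
  shows "zat (p @ q) t \<longleftrightarrow> zat q (t - length p)"
  using assms by (simp add: zat_def)

lemma zat_append_le:
  assumes "t \<le> length p"
  shows "zat (p @ q) t \<longleftrightarrow> zat p t"
  using assms by (simp add: zat_def)

lemma Zc_append:
  assumes p: "p \<in> Pr L" and q: "q \<in> Ev m" and L: "L \<ge> 1"
  shows "Zc (p @ q) = (if m = 0 then 0 else Suc (Zc q))"
proof -
  have lp: "length p = L" and cp: "cf p = cs p" and zp: "Zc p = 0"
    using p by (auto simp: Pr_def Ev_def)
  have lq: "length q = m" using q by (simp add: Ev_def)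
  have fin: "finite {t \<in> {1..<L}. zat p t}" by simp
  have nz: "\<And>t. 1 \<le> t \<Longrightarrow> t < L \<Longrightarrow> \<not> zat p t"
  proof -
    fix t assume "1 \<le> t" "t < L"
    have "card {t \<in> {1..<L}. zat p t} = 0" using zp lp unfolding Zc_def by simp
    then have "{t \<in> {1..<L}. zat p t} = {}" using card_0_eq[OF fin] by blast
    then show "\<not> zat p t" using \<open>1 \<le> t\<close> \<open>t < L\<close> by auto
  qed
  have zpL: "zat p L" using cp lp by (simp add: zat_def)
  have S: "{t \<in> {1..<L+m}. zat (p@q) t} = (if m = 0 then {} else {L}) \<union> (\<lambda>t. t + L) ` {t \<in> {1..<m}. zat q t}"
  proof (intro set_eqI iffI)
    fix t assume "t \<in> {t \<in> {1..<L+m}. zat (p@q) t}"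
    then have t: "1 \<le> t" "t < L + m" "zat (p@q) t" by auto
    show "t \<in> (if m = 0 then {} else {L}) \<union> (\<lambda>t. t + L) ` {t \<in> {1..<m}. zat q t}"
    proof (cases "t < L")
      case True
      then have "zat p t" using t zat_append_le[of t p q] lp by simp
      then show ?thesis using nz t True by blast
    next
      case False
      then have zq: "zat q (t - L)" using t zat_append_ge[of p t q] lp cp by simp
      show ?thesis
      proof (cases "t = L")
        case True then show ?thesis using t by auto
      next
        case False
        then have "t - L \<in> {t \<in> {1..<m}. zat q t}" using zq t \<open>\<not> t < L\<close> by auto
        moreover have "t = (t - L) + L" using \<open>\<not> t < L\<close> by simp
        ultimately show ?thesis by blast
      qed
    qed
  next
    fix t assume "t \<in> (if m = 0 then {} else {L}) \<union> (\<lambda>t. t + L) ` {t \<in> {1..<m}. zat q t}"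
    then consider "m \<noteq> 0" "t = L" | s where "t = s + L" "1 \<le> s" "s < m" "zat q s"
      by (auto split: if_splits)
    then show "t \<in> {t \<in> {1..<L+m}. zat (p@q) t}"
    proof cases
      case 1
      then show ?thesis using zpL L zat_append_le[of L p q] lp by simp
    next
      case 2
      then show ?thesis using zat_append_ge[of p t q] lp cp L by simp
    qed
  qed
  have "Zc (p @ q) = card ((if m = 0 then {} else {L}) \<union> (\<lambda>t. t + L) ` {t \<in> {1..<m}. zat q t})"
    unfolding Zc_def using S lp lq by simp
  also have "\<dots> = card (if m = 0 then {} else {L}) + card ((\<lambda>t. t + L) ` {t \<in> {1..<m}. zat q t})"
    by (rule card_Un_disjoint) auto
  also have "card ((\<lambda>t. t + L) ` {t \<in> {1..<m}. zat q t}) = Zc q"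
    unfolding Zc_def lq by (rule card_image) (simp add: inj_on_def)
  finally have "Zc (p @ q) = card (if m = 0 then {} else {L}) + Zc q" .
  moreover have "m = 0 \<Longrightarrow> Zc q = 0" using lq by (simp add: Zc_def)
  ultimately show ?thesis by simp
qed

lemma decomp_bij:
  assumes "n \<ge> 1"
  shows "bij_betw (\<lambda>(L, p, q). p @ q) (SIGMA L:{1..n}. Pr L \<times> Ev (n - L)) (Ev n)"
proof (rule bij_betwI')
  fix x y assume x: "x \<in> (SIGMA L:{1..n}. Pr L \<times> Ev (n - L))" and y: "y \<in> (SIGMA L:{1..n}. Pr L \<times> Ev (n - L))"
  obtain L p q where xe: "x = (L, p, q)" by (cases x) auto
  obtain L' p' q' where ye: "y = (L', p', q')" by (cases y) auto
  have h: "L \<in> {1..n}" "p \<in> Pr L" "q \<in> Ev (n - L)" using x xe by auto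
  have h': "L' \<in> {1..n}" "p' \<in> Pr L'" "q' \<in> Ev (n - L')" using y ye by auto
  show "((\<lambda>(L, p, q). p @ q) x = (\<lambda>(L, p, q). p @ q) y) = (x = y)"
  proof
    assume eq: "(\<lambda>(L, p, q). p @ q) x = (\<lambda>(L, p, q). p @ q) y"
    then have e: "p @ q = p' @ q'" using xe ye by simp
    have lp: "length p = L" "cf p = cs p" using h by (auto simp: Pr_def Ev_def)
    have lp': "length p' = L'" "cf p' = cs p'" using h' by (auto simp: Pr_def Ev_def)
    have noint: "\<And>L p t. p \<in> Pr L \<Longrightarrow> 1 \<le> t \<Longrightarrow> t < L \<Longrightarrow> \<not> zat p t"
    proof -
      fix L p t assume a: "p \<in> Pr L" "1 \<le> t" "t < L"
      then have "card {t \<in> {1..<length p}. zat p t} = 0" "length p = L"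
        unfolding Pr_def Ev_def Zc_def by auto
      then have "card {t \<in> {1..<L}. zat p t} = 0" by simp
      then have "{t \<in> {1..<L}. zat p t} = {}" using card_0_eq[of "{t \<in> {1..<L}. zat p t}"] by simp
      then show "\<not> zat p t" using a by auto
    qed
    have "L = L'"
    proof (rule ccontr)
      assume "L \<noteq> L'"
      then consider "L < L'" | "L' < L" by linarith
      then show False
      proof cases
        case 1
        have "zat (p @ q) L" using zat_append_le[of L p q] lp by (simp add: zat_def)
        then have "zat (p' @ q') L" using e by simp
        then have "zat p' L" using zat_append_le[of L p' q'] lp' 1 by simp
        then show False using noint[OF h'(2)] h 1 by auto
      next
        case 2
        have "zat (p' @ q') L'" using zat_append_le[of L' p' q'] lp' by (simp add: zat_def)
        then have "zat (p @ q) L'" using e by simp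
        then have "zat p L'" using zat_append_le[of L' p q] lp 2 by simp
        then show False using noint[OF h(2)] h' 2 by auto
      qed
    qed
    then have "p = p'" "q = q'" using e lp lp' by (auto simp: append_eq_append_conv)
    then show "x = y" using xe ye \<open>L = L'\<close> by simp
  qed simp
next
  fix x assume "x \<in> (SIGMA L:{1..n}. Pr L \<times> Ev (n - L))"
  then obtain L p q where xe: "x = (L, p, q)" and h: "L \<in> {1..n}" "p \<in> Pr L" "q \<in> Ev (n - L)" by auto
  have "length (p @ q) = n" "cf (p @ q) = cs (p @ q)" using h by (auto simp: Pr_def Ev_def)
  then show "(\<lambda>(L, p, q). p @ q) x \<in> Ev n" using xe by (simp add: Ev_def)
next
  fix xs assume xs: "xs \<in> Ev n"
  then have lx: "length xs = n" and cx: "cf xs = cs xs" by (auto simp: Ev_def)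
  define L where "L = (LEAST t. 1 \<le> t \<and> zat xs t)"
  have ex: "1 \<le> n \<and> zat xs n" using assms lx cx by (simp add: zat_def)
  have L1: "1 \<le> L \<and> zat xs L" unfolding L_def by (rule LeastI[of _ n]) (rule ex)
  have Ln: "L \<le> n" unfolding L_def by (rule Least_le) (rule ex)
  have Lmin: "\<And>t. 1 \<le> t \<Longrightarrow> t < L \<Longrightarrow> \<not> zat xs t"
    unfolding L_def using not_less_Least by blast
  define p where "p = take L xs"
  define q where "q = drop L xs"
  have lp: "length p = L" using Ln lx by (simp add: p_def)
  have cp: "cf p = cs p" using L1 by (simp add: p_def zat_def)
  have pq: "xs = p @ q" by (simp add: p_def q_def)
  have "Zc p = 0"
  proof -
    have "{t \<in> {1..<length p}. zat p t} = {}"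
    proof (intro equalityI subsetI)
      fix t assume "t \<in> {t \<in> {1..<length p}. zat p t}"
      then have t: "1 \<le> t" "t < L" "zat p t" using lp by auto
      then have "zat xs t" using zat_append_le[of t p q] pq lp by simp
      then show "t \<in> {}" using Lmin t by blast
    qed simp
    then show ?thesis by (simp add: Zc_def)
  qed
  then have pP: "p \<in> Pr L" using lp cp by (simp add: Pr_def Ev_def)
  have "cf xs = cf p + cf q" "cs xs = cs p + cs q" using pq by (metis cf_append, metis cs_append)
  then have qE: "q \<in> Ev (n - L)" using cx cp lx by (simp add: Ev_def q_def)
  show "\<exists>x \<in> (SIGMA L:{1..n}. Pr L \<times> Ev (n - L)). xs = (\<lambda>(L, p, q). p @ q) x"
    using pP qE L1 Ln pq by (intro bexI[of _ "(L, p, q)"]) auto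
qed

lemma decomp_sum:
  fixes \<phi> :: "stp list \<Rightarrow> 'a::comm_monoid_add"
  assumes "n \<ge> 1"
  shows "(\<Sum>xs\<in>Ev n. \<phi> xs) = (\<Sum>L=1..n. \<Sum>p\<in>Pr L. \<Sum>q\<in>Ev (n - L). \<phi> (p @ q))"
proof -
  have "(\<Sum>xs\<in>Ev n. \<phi> xs) = (\<Sum>x\<in>(SIGMA L:{1..n}. Pr L \<times> Ev (n - L)). \<phi> ((\<lambda>(L, p, q). p @ q) x))"
    by (rule sum.reindex_bij_betw[symmetric]) (rule decomp_bij[OF assms])
  also have "\<dots> = (\<Sum>(L,pq)\<in>(SIGMA L:{1..n}. Pr L \<times> Ev (n - L)). \<phi> (fst pq @ snd pq))"
    by (rule sum.cong) auto
  also have "\<dots> = (\<Sum>L=1..n. \<Sum>pq\<in>Pr L \<times> Ev (n - L). \<phi> (fst pq @ snd pq))"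
    by (rule sum.Sigma[symmetric]) (auto simp: finite_Pr finite_Ev)
  also have "\<dots> = (\<Sum>L=1..n. \<Sum>p\<in>Pr L. \<Sum>q\<in>Ev (n - L). \<phi> (p @ q))"
    by (simp add: sum.cartesian_product split_beta)
  finally show ?thesis .
qed



definition wt :: "stp list \<Rightarrow> real poly" where "wt xs = monom 1 (cf xs)"
definition W :: "nat \<Rightarrow> nat \<Rightarrow> real poly" where
  "W k n = (\<Sum>xs\<in>{xs \<in> Ev n. Zc xs = k}. wt xs)"
definition Tp :: "nat \<Rightarrow> real poly" where "Tp n = (\<Sum>xs\<in>Ev n. wt xs)"
definition Gf :: "real poly fps" where "Gf = Abs_fps (\<lambda>n. if n = 0 then 0 else W 0 n)"
definition Tf :: "real poly fps" where "Tf = Abs_fps Tp"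

lemma wt_append: "wt (p @ q) = wt p * wt q"
  by (simp add: wt_def mult_monom)

lemma W_as_sum: "W k n = (\<Sum>xs\<in>Ev n. if Zc xs = k then wt xs else 0)"
  unfolding W_def by (simp add: sum.inter_filter[symmetric] finite_Ev)

lemma W0_Pr: "W 0 L = (\<Sum>p\<in>Pr L. wt p)"
  by (simp add: W_def Pr_def)

lemma W_Suc:
  assumes "n \<ge> 1"
  shows "W (Suc k) n = (\<Sum>L=1..n. if L < n then W 0 L * W k (n - L) else 0)"
proof -
  have "W (Suc k) n = (\<Sum>L=1..n. \<Sum>p\<in>Pr L. \<Sum>q\<in>Ev (n - L). if Zc (p @ q) = Suc k then wt (p @ q) else 0)"
    unfolding W_as_sum by (rule decomp_sum[OF assms])
  also have "\<dots> = (\<Sum>L=1..n. if L < n then W 0 L * W k (n - L) else 0)"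
  proof (rule sum.cong[OF refl])
    fix L assume L: "L \<in> {1..n}"
    have "(\<Sum>p\<in>Pr L. \<Sum>q\<in>Ev (n - L). if Zc (p @ q) = Suc k then wt (p @ q) else 0)
        = (\<Sum>p\<in>Pr L. \<Sum>q\<in>Ev (n - L). if L < n then wt p * (if Zc q = k then wt q else 0) else 0)"
    proof (intro sum.cong[OF refl])
      fix p q assume p: "p \<in> Pr L" and q: "q \<in> Ev (n - L)"
      have "Zc (p @ q) = (if n - L = 0 then 0 else Suc (Zc q))"
        using Zc_append[OF p q] L by simp
      then show "(if Zc (p @ q) = Suc k then wt (p @ q) else 0) = (if L < n then wt p * (if Zc q = k then wt q else 0) else 0)"
        using L by (auto simp: wt_append)
    qed
    also have "\<dots> = (if L < n then W 0 L * W k (n - L) else 0)"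
    proof -
      have "W 0 L * W k (n - L) = (\<Sum>p\<in>Pr L. wt p) * (\<Sum>q\<in>Ev (n - L). if Zc q = k then wt q else 0)"
        by (simp only: W0_Pr W_as_sum[of k])
      then show ?thesis by (simp add: sum_product)
    qed
    finally show "(\<Sum>p\<in>Pr L. \<Sum>q\<in>Ev (n - L). if Zc (p @ q) = Suc k then wt (p @ q) else 0)
        = (if L < n then W 0 L * W k (n - L) else 0)" .
  qed
  finally show ?thesis .
qed

lemma Tp_rec:
  assumes "n \<ge> 1"
  shows "Tp n = (\<Sum>L=1..n. W 0 L * Tp (n - L))"
proof -
  have "Tp n = (\<Sum>L=1..n. \<Sum>p\<in>Pr L. \<Sum>q\<in>Ev (n - L). wt (p @ q))"
    unfolding Tp_def by (rule decomp_sum[OF assms])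
  also have "\<dots> = (\<Sum>L=1..n. W 0 L * Tp (n - L))"
    by (simp add: W0_Pr Tp_def wt_append sum_product)
  finally show ?thesis .
qed

lemma Ev0: "Ev 0 = {[]}"
  by (auto simp: Ev_def cf_def cs_def)

lemma Tp0: "Tp 0 = 1"
  by (simp add: Tp_def Ev0 wt_def cf_def)

lemma Tf_eq: "Tf = 1 + Gf * Tf"
proof (rule fps_ext)
  fix n
  show "Tf $ n = (1 + Gf * Tf) $ n"
  proof (cases "n = 0")
    case True
    then show ?thesis by (simp add: Tf_def Gf_def Tp0)
  next
    case False
    have "(Gf * Tf) $ n = (\<Sum>i=0..n. Gf $ i * Tf $ (n - i))" by (rule fps_mult_nth)
    also have "\<dots> = (\<Sum>i=1..n. Gf $ i * Tf $ (n - i))"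
      by (rule sum.mono_neutral_right) (auto simp: Gf_def)
    also have "\<dots> = (\<Sum>i=1..n. W 0 i * Tp (n - i))"
      by (rule sum.cong) (auto simp: Gf_def Tf_def)
    also have "\<dots> = Tp n" using Tp_rec[of n] False by simp
    finally show ?thesis using False by (simp add: Tf_def)
  qed
qed

lemma W_power:
  "n \<ge> 1 \<Longrightarrow> W k n = (Gf ^ Suc k) $ n"
proof (induction k arbitrary: n)
  case 0
  then show ?case by (simp add: Gf_def)
next
  case (Suc k)
  have z: "(Gf ^ Suc k) $ 0 = 0" by (simp add: Gf_def)
  have "(Gf ^ Suc (Suc k)) $ n = (Gf * Gf ^ Suc k) $ n" by simp
  also have "\<dots> = (\<Sum>i=0..n. Gf $ i * (Gf ^ Suc k) $ (n - i))" by (rule fps_mult_nth)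
  also have "\<dots> = (\<Sum>i=1..n. if i < n then W 0 i * W k (n - i) else 0)"
  proof -
    have "(\<Sum>i=0..n. Gf $ i * (Gf ^ Suc k) $ (n - i)) = (\<Sum>i=1..n. Gf $ i * (Gf ^ Suc k) $ (n - i))"
      by (rule sum.mono_neutral_right) (auto simp: Gf_def)
    also have "\<dots> = (\<Sum>i=1..n. if i < n then W 0 i * W k (n - i) else 0)"
    proof (rule sum.cong[OF refl])
      fix i assume i: "i \<in> {1..n}"
      show "Gf $ i * (Gf ^ Suc k) $ (n - i) = (if i < n then W 0 i * W k (n - i) else 0)"
      proof (cases "i < n")
        case True
        then show ?thesis using i Suc.IH[of "n - i"] by (simp add: Gf_def)
      next
        case False
        then have "n - i = 0" by simp
        then show ?thesis using False z by simp
      qed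
    qed
    finally show ?thesis .
  qed
  also have "\<dots> = W (Suc k) n" using W_Suc[OF Suc.prems] by simp
  finally show ?case by simp
qed


lemma coeff_sum_monom:
  assumes "finite A"
  shows "coeff (\<Sum>x\<in>A. monom (1::real) (f x)) r = real (card {x\<in>A. f x = r})"
proof -
  have "coeff (\<Sum>x\<in>A. monom (1::real) (f x)) r = (\<Sum>x\<in>A. if f x = r then 1 else 0)"
    by (simp add: coeff_sum coeff_monom)
  also have "\<dots> = real (card (A \<inter> {x. f x = r}))"
    using assms by (simp add: sum.If_cases)
  also have "A \<inter> {x. f x = r} = {x\<in>A. f x = r}" by auto
  finally show ?thesis .
qed

lemma coeff_W: "coeff (W k n) r = real (card {xs \<in> Ev n. Zc xs = k \<and> cf xs = r})"
proof -
  have "coeff (W k n) r = real (card {xs \<in> {xs \<in> Ev n. Zc xs = k}. cf xs = r})"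
    unfolding W_def wt_def by (rule coeff_sum_monom) (simp add: finite_Ev)
  also have "{xs \<in> {xs \<in> Ev n. Zc xs = k}. cf xs = r} = {xs \<in> Ev n. Zc xs = k \<and> cf xs = r}" by auto
  finally show ?thesis .
qed

lemma coeff_Tp: "coeff (Tp n) r = real (card {xs \<in> Ev n. cf xs = r})"
  unfolding Tp_def wt_def by (rule coeff_sum_monom) (simp add: finite_Ev)

definition bl :: "nat \<Rightarrow> nat \<Rightarrow> bool list set" where
  "bl n r = {s. length s = n \<and> length (filter id s) = r}"

lemma card_bl: "card (bl n r) = n choose r"
proof (induction n arbitrary: r)
  case 0
  have "bl 0 r = (if r = 0 then {[]} else {})" by (auto simp: bl_def)
  then show ?case by simp
next
  case (Suc n)
  have fin: "finite (bl n r)" for r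
  proof -
    have "bl n r \<subseteq> {s. set s \<subseteq> UNIV \<and> length s = n}" by (auto simp: bl_def)
    moreover have "finite {s::bool list. set s \<subseteq> UNIV \<and> length s = n}"
      by (rule finite_lists_length_eq) simp
    ultimately show ?thesis by (rule finite_subset)
  qed
  show ?case
  proof (cases r)
    case 0
    have "bl (Suc n) 0 = (Cons False) ` bl n 0"
    proof (intro set_eqI iffI)
      fix s assume "s \<in> bl (Suc n) 0"
      then obtain x s' where "s = x # s'" "length s' = n" "length (filter id s) = 0"
        by (cases s) (auto simp: bl_def)
      then show "s \<in> (Cons False) ` bl n 0" by (cases x) (auto simp: bl_def)
    qed (auto simp: bl_def)
    then have "card (bl (Suc n) 0) = card (bl n 0)" by (simp add: card_image)
    then show ?thesis using 0 Suc.IH[of 0] by simp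
  next
    case (Suc r')
    have "bl (Suc n) r = (Cons True) ` bl n r' \<union> (Cons False) ` bl n r"
    proof (intro set_eqI iffI)
      fix s assume "s \<in> bl (Suc n) r"
      then obtain x s' where "s = x # s'" "length s' = n" "length (filter id s) = r"
        by (cases s) (auto simp: bl_def)
      then show "s \<in> (Cons True) ` bl n r' \<union> (Cons False) ` bl n r"
        using Suc by (cases x) (auto simp: bl_def)
    qed (auto simp: bl_def Suc)
    moreover have "card ((Cons True) ` bl n r' \<union> (Cons False) ` bl n r) = card (bl n r') + card (bl n r)"
      by (subst card_Un_disjoint) (auto simp: fin card_image)
    ultimately show ?thesis using Suc Suc.IH by simp
  qed
qed

lemma cf_zip: "length s1 = length s2 \<Longrightarrow> cf (zip s1 s2) = length (filter id s1)"
proof (induction s1 arbitrary: s2)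
  case (Cons a s1)
  then obtain b s2' where "s2 = b # s2'" by (cases s2) auto
  then show ?case using Cons by (simp add: cf_def)
qed (simp add: cf_def)

lemma cs_zip: "length s1 = length s2 \<Longrightarrow> cs (zip s1 s2) = length (filter id s2)"
proof (induction s1 arbitrary: s2)
  case (Cons a s1)
  then obtain b s2' where "s2 = b # s2'" by (cases s2) auto
  then show ?case using Cons by (simp add: cs_def)
qed (simp add: cs_def)

lemma card_Ev_r: "card {xs \<in> Ev n. cf xs = r} = (n choose r)^2"
proof -
  have "bij_betw (\<lambda>(s1, s2). zip s1 s2) (bl n r \<times> bl n r) {xs \<in> Ev n. cf xs = r}"
  proof (rule bij_betw_imageI)
    show "inj_on (\<lambda>(s1, s2). zip s1 s2) (bl n r \<times> bl n r)"
    proof (rule inj_onI)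
      fix x y assume "x \<in> bl n r \<times> bl n r" "y \<in> bl n r \<times> bl n r"
        and e: "(\<lambda>(s1, s2). zip s1 s2) x = (\<lambda>(s1, s2). zip s1 s2) y"
      then obtain a b c d where "x = (a, b)" "y = (c, d)" "length a = n" "length b = n"
        "length c = n" "length d = n" by (auto simp: bl_def)
      then show "x = y" using e by (metis case_prod_conv zip_eq_conv)
    qed
  next
    show "(\<lambda>(s1, s2). zip s1 s2) ` (bl n r \<times> bl n r) = {xs \<in> Ev n. cf xs = r}"
    proof (intro set_eqI iffI)
      fix xs assume "xs \<in> (\<lambda>(s1, s2). zip s1 s2) ` (bl n r \<times> bl n r)"
      then obtain a b where "xs = zip a b" "a \<in> bl n r" "b \<in> bl n r" by auto
      then show "xs \<in> {xs \<in> Ev n. cf xs = r}"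
        by (auto simp: bl_def Ev_def cf_zip cs_zip)
    next
      fix xs assume xs: "xs \<in> {xs \<in> Ev n. cf xs = r}"
      have "length (filter id (map fst xs)) = cf xs" "length (filter id (map snd xs)) = cs xs"
        by (simp_all add: cf_def cs_def filter_map comp_def)
      then have "(map fst xs, map snd xs) \<in> bl n r \<times> bl n r" using xs by (auto simp: bl_def Ev_def)
      moreover have "xs = (\<lambda>(s1, s2). zip s1 s2) (map fst xs, map snd xs)" by (simp add: zip_map_fst_snd)
      ultimately show "xs \<in> (\<lambda>(s1, s2). zip s1 s2) ` (bl n r \<times> bl n r)" by blast
    qed
  qed
  then have "card {xs \<in> Ev n. cf xs = r} = card (bl n r \<times> bl n r)" by (simp add: bij_betw_same_card)
  also have "\<dots> = (n choose r)^2" by (simp add: card_cartesian_product card_bl power2_eq_square)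
  finally show ?thesis .
qed

lemma coeff_Tp_binom: "coeff (Tp n) r = real (n choose r) ^ 2"
  by (simp add: coeff_Tp card_Ev_r)

lemma diag_Zc:
  assumes "\<forall>x\<in>set xs. fst x = snd x"
  shows "Zc xs = length xs - 1"
proof -
  have "\<And>t. zat xs t"
  proof -
    fix t
    have "\<forall>x\<in>set (take t xs). fst x = snd x" using assms by (meson in_set_takeD)
    then have "filter fst (take t xs) = filter snd (take t xs)" by (induction "take t xs") (auto intro: filter_cong)
    then show "zat xs t" by (simp add: zat_def cf_def cs_def)
  qed
  then have "{t \<in> {1..<length xs}. zat xs t} = {1..<length xs}" by auto
  then show ?thesis by (simp add: Zc_def)
qed

lemma len_filter_all: "length (filter P xs) = length xs \<Longrightarrow> \<forall>x\<in>set xs. P x"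
  by (metis filter_True length_filter_less less_irrefl)

lemma card_zero_cases:
  assumes "k + 2 \<le> n" and "r = 0 \<or> n \<le> r"
  shows "card {xs \<in> Ev n. Zc xs = k \<and> cf xs = r} = 0"
proof -
  have "{xs \<in> Ev n. Zc xs = k \<and> cf xs = r} = {}"
  proof (rule ccontr)
    assume "{xs \<in> Ev n. Zc xs = k \<and> cf xs = r} \<noteq> {}"
    then obtain xs where xs: "length xs = n" "cf xs = cs xs" "Zc xs = k" "cf xs = r"
      by (auto simp: Ev_def)
    have "\<forall>x\<in>set xs. fst x = snd x"
    proof (cases "r = 0")
      case True
      then have "filter fst xs = []" "filter snd xs = []" using xs by (auto simp: cf_def cs_def)
      then show ?thesis by (auto simp: filter_empty_conv)
    next
      case False
      then have "n \<le> r" using assms by simp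
      moreover have "cf xs \<le> n" "cs xs \<le> n" using xs by (auto simp: cf_def cs_def)
      ultimately have "length (filter fst xs) = length xs" "length (filter snd xs) = length xs"
        using xs by (auto simp: cf_def cs_def)
      then show ?thesis using len_filter_all by blast
    qed
    then have "Zc xs = n - 1" using diag_Zc xs by simp
    then show False using xs assms by simp
  qed
  then show ?thesis by (simp only: card.empty)
qed



definition aa :: "real poly" where "aa = [:0, 1:]"

definition cI :: "real poly \<Rightarrow> int \<Rightarrow> real" where
  "cI p j = (if j < 0 then 0 else coeff p (nat j))"

lemma poly_eq_cI: "(\<And>j. j \<ge> 0 \<Longrightarrow> cI p j = cI q j) \<Longrightarrow> p = q"
proof (rule poly_eqI)
  fix n assume h: "\<And>j. j \<ge> 0 \<Longrightarrow> cI p j = cI q j"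
  show "coeff p n = coeff q n" using h[of "int n"] by (simp add: cI_def)
qed

lemma cI_add: "cI (p + q) j = cI p j + cI q j" by (simp add: cI_def)
lemma cI_diff: "cI (p - q) j = cI p j - cI q j" by (simp add: cI_def)
lemma cI_smult_nat: "cI (of_nat c * p) j = of_nat c * cI p j"
  by (simp add: cI_def of_nat_poly)
lemma cI_num: "cI (numeral c * p) j = numeral c * cI p j"
  using cI_smult_nat[of "numeral c" p j] by simp
lemma cI_aa: "cI (aa * p) j = cI p (j - 1)"
  by (auto simp: cI_def aa_def coeff_pCons nat_diff_distrib' split: nat.split)
lemma cI_1a: "cI ((1 + aa) * p) j = cI p j + cI p (j - 1)"
  by (simp add: distrib_right cI_add cI_aa)
lemma cI_1a2: "cI ((1 - aa)^2 * p) j = cI p j - 2 * cI p (j - 1) + cI p (j - 2)"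
proof -
  have "(1 - aa)^2 * p = p - 2 * (aa * p) + aa * (aa * p)"
    by (simp add: power2_eq_square algebra_simps)
  then show ?thesis by (simp add: cI_add cI_diff cI_num cI_aa)
qed

definition Dl :: "real poly fps" where
  "Dl = 1 - fps_const (2 * (1 + aa)) * fps_X + fps_const ((1 - aa)^2) * fps_X^2"

lemma Dl_nth: "Dl $ n = (if n = 0 then 1 else if n = 1 then - 2 * (1 + aa) else if n = 2 then (1 - aa)^2 else 0)"
  unfolding Dl_def by (simp add: fps_X_power_nth)

lemma Dl_mult_nth:
  "(Dl * f) $ n = f $ n - 2 * (1 + aa) * (if n = 0 then 0 else f $ (n - 1))
     + (1 - aa)^2 * (if n < 2 then 0 else f $ (n - 2))"
proof -
  have "Dl * f = f - fps_const (2 * (1 + aa)) * (fps_X * f) + fps_const ((1 - aa)^2) * (fps_X^2 * f)"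
    unfolding Dl_def by (simp only: ring_distribs mult.assoc mult_1)
  then show ?thesis by (simp add: fps_X_mult_nth fps_X_power_mult_nth)
qed

lemma Dl_deriv: "fps_deriv Dl = fps_const (- 2 * (1 + aa)) + fps_const (2 * (1 - aa)^2) * fps_X"
proof (rule fps_ext)
  fix n
  show "fps_deriv Dl $ n = (fps_const (- 2 * (1 + aa)) + fps_const (2 * (1 - aa)^2) * fps_X) $ n"
    by (cases n) (auto simp: Dl_nth fps_X_nth)
qed



lemma binom_Bn: "real (m choose j) = Bn (int m) (int j)"
proof (cases "j \<le> m")
  case True
  then show ?thesis
    by (simp add: Bn_def nf_def rf_def binomial_fact of_nat_diff nat_diff_distrib)
next
  case False
  then show ?thesis by (simp add: Bn_def rf_def)
qed

lemma cI_Tp: "cI (Tp m) j = (Bn (int m) j)^2"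
proof (cases "j < 0")
  case True
  then show ?thesis by (simp add: cI_def Bn_def rf_def)
next
  case False
  then show ?thesis using binom_Bn[of m "nat j"] by (simp add: cI_def coeff_Tp_binom)
qed

lemma cI_1a_nat: "cI ((1 + aa) * (of_nat c * p)) j = of_nat c * (cI p j + cI p (j - 1))"
proof -
  have "(1 + aa) * (of_nat c * p) = of_nat c * ((1 + aa) * p)" by (simp only: mult.left_commute)
  then show ?thesis by (simp only: cI_1a cI_smult_nat)
qed

lemma cI_1a2_nat: "cI ((1 - aa)^2 * (of_nat c * p)) j = of_nat c * (cI p j - 2 * cI p (j - 1) + cI p (j - 2))"
proof -
  have "(1 - aa)^2 * (of_nat c * p) = of_nat c * ((1 - aa)^2 * p)" by (simp only: mult.left_commute)
  then show ?thesis by (simp only: cI_1a2 cI_smult_nat)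
qed

lemma Tp_leg:
  assumes "n \<ge> 1"
  shows "of_nat (n+1) * Tp (n+1) = (1 + aa) * (of_nat (2*n+1) * Tp n) - (1 - aa)^2 * (of_nat n * Tp (n-1))"
proof (rule poly_eq_cI)
  fix j :: int
  have L: "of_int (int n + 1) * (Bn (int n + 1) j)^2 = of_int (2*(int n+1)-1) * ((Bn (int n + 1 - 1) j)^2 + (Bn (int n + 1 - 1) (j-1))^2)
     - of_int (int n + 1 - 1) * ((Bn (int n + 1 - 2) j)^2 - 2 * (Bn (int n + 1 - 2) (j-1))^2 + (Bn (int n + 1 - 2) (j-2))^2)"
    by (rule legendre) (use assms in simp)
  have e: "int n + 1 - 2 = int (n - 1)" "int n + 1 - 1 = int n" "int (n+1) = int n + 1" using assms by simp_all
  show "cI (of_nat (n+1) * Tp (n+1)) j = cI ((1 + aa) * (of_nat (2*n+1) * Tp n) - (1 - aa)^2 * (of_nat n * Tp (n-1))) j"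
    unfolding cI_diff cI_1a_nat cI_1a2_nat cI_smult_nat cI_Tp
    using L unfolding e by (simp add: algebra_simps)
qed

lemma Tp1: "Tp 1 = (1 + aa) * Tp 0"
proof (rule poly_eq_cI)
  fix j :: int assume "j \<ge> 0"
  have "cI (Tp 1) j = (Bn 1 j)^2" using cI_Tp[of 1 j] by simp
  moreover have "cI ((1 + aa) * Tp 0) j = (Bn 0 j)^2 + (Bn 0 (j-1))^2"
    by (simp add: cI_1a cI_Tp)
  moreover have "(Bn 1 j)^2 = (Bn 0 j)^2 + (Bn 0 (j-1))^2"
  proof -
    consider "j = 0" | "j = 1" | "j \<ge> 2" using \<open>j \<ge> 0\<close> by linarith
    then show ?thesis
      by cases (auto simp: Bn_def rf_def nf_def)
  qed
  ultimately show "cI (Tp 1) j = cI ((1 + aa) * Tp 0) j" by simp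
qed

lemma Tf_ode: "2 * Dl * fps_deriv Tf + fps_deriv Dl * Tf = 0"
proof (rule fps_ext)
  fix n
  have A: "(2 * Dl * fps_deriv Tf) $ n = 2 * ((Dl * fps_deriv Tf) $ n)"
    by (simp only: mult_2 distrib_right fps_add_nth)
  have B: "(fps_deriv Dl * Tf) $ n = - 2 * (1 + aa) * Tp n + (if n = 0 then 0 else 2 * (1 - aa)^2 * Tp (n - 1))"
    by (simp add: Dl_deriv distrib_right mult.assoc fps_X_mult_nth Tf_def)
  show "(2 * Dl * fps_deriv Tf + fps_deriv Dl * Tf) $ n = 0 $ n"
  proof (cases n)
    case 0
    then show ?thesis unfolding fps_add_nth A B Dl_mult_nth
      using Tp1 by (simp add: Tf_def algebra_simps)
  next
    case (Suc m)
    have leg: "of_nat (n+1) * Tp (n+1) = (1 + aa) * (of_nat (2*n+1) * Tp n) - (1 - aa)^2 * (of_nat n * Tp (n-1))"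
      by (rule Tp_leg) (simp add: Suc)
    have "(2 * Dl * fps_deriv Tf + fps_deriv Dl * Tf) $ n
      = 2 * (of_nat (n+1) * Tp (n+1) - 2 * (1 + aa) * (of_nat n * Tp n)
          + (1 - aa)^2 * (if n < 2 then 0 else of_nat (n - 1) * Tp (n - 1)))
        - 2 * (1 + aa) * Tp n + 2 * (1 - aa)^2 * Tp (n - 1)"
      unfolding fps_add_nth A B Dl_mult_nth using Suc by (simp add: Tf_def algebra_simps)
    also have "\<dots> = 2 * (of_nat (n+1) * Tp (n+1) - ((1 + aa) * (of_nat (2*n+1) * Tp n) - (1 - aa)^2 * (of_nat n * Tp (n-1))))"
    proof (cases "n < 2")
      case True
      then have "n = 1" using Suc by simp
      then show ?thesis by (simp add: algebra_simps)
    next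
      case False
      then have "of_nat n = (of_nat (n - 1) + 1 :: real poly)" by (simp add: of_nat_diff)
      then show ?thesis using False by (simp add: algebra_simps)
    qed
    also have "\<dots> = 0" using leg by simp
    finally show ?thesis by simp
  qed
qed

lemma Tf0: "Tf $ 0 = 1" by (simp add: Tf_def Tp0)

lemma Tf_sq_Dl: "Tf^2 * Dl = 1"
proof -
  have "fps_deriv (Tf^2 * Dl) = Tf * (2 * Dl * fps_deriv Tf + fps_deriv Dl * Tf)"
    by (simp add: fps_deriv_power power2_eq_square algebra_simps)
  also have "\<dots> = 0" by (simp add: Tf_ode)
  finally have "Tf^2 * Dl = fps_const ((Tf^2 * Dl) $ 0)" by (simp only: fps_deriv_eq_0_iff)
  also have "(Tf^2 * Dl) $ 0 = 1" by (simp add: Tf0 Dl_nth power2_eq_square)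
  finally show ?thesis by simp
qed

lemma Gf_sq: "(1 - Gf)^2 = Dl"
proof -
  have T1: "Tf * (1 - Gf) = 1" using Tf_eq by (simp add: algebra_simps)
  have "(1 - Gf)^2 = (1 - Gf)^2 * (Tf^2 * Dl)" by (simp add: Tf_sq_Dl)
  also have "\<dots> = (Tf * (1 - Gf))^2 * Dl" by (simp only: power_mult_distrib mult_ac)
  also have "\<dots> = Dl" by (simp add: T1)
  finally show ?thesis .
qed



lemma Gf0: "Gf $ 0 = 0" by (simp add: Gf_def)

lemma Gf_ode: "2 * Dl * fps_deriv Gf = fps_deriv Dl * (Gf - 1)"
proof -
  have "fps_deriv Dl = fps_deriv ((1 - Gf) * (1 - Gf))" by (simp only: Gf_sq[symmetric] power2_eq_square)
  also have "\<dots> = (1 - Gf) * (- fps_deriv Gf) + (- fps_deriv Gf) * (1 - Gf)"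
    by (simp only: fps_deriv_mult fps_deriv_sub fps_deriv_1 diff_0)
  finally have d: "fps_deriv Dl = (1 - Gf) * (- fps_deriv Gf) + (- fps_deriv Gf) * (1 - Gf)" .
  have "2 * Dl * fps_deriv Gf = 2 * (1 - Gf)^2 * fps_deriv Gf" by (simp only: Gf_sq)
  also have "\<dots> = ((1 - Gf) * (- fps_deriv Gf) + (- fps_deriv Gf) * (1 - Gf)) * (Gf - 1)" by algebra
  also have "\<dots> = fps_deriv Dl * (Gf - 1)" by (simp only: d)
  finally show ?thesis .
qed

lemma Gf_coeffs:
  "Gf $ 1 = 1 + aa" "Gf $ 2 = 2 * aa"
  "\<And>n. n \<ge> 2 \<Longrightarrow> of_nat (n+1) * Gf $ (n+1) = (1 + aa) * (of_nat (2*n-1) * Gf $ n) - (1 - aa)^2 * (of_nat (n-2) * Gf $ (n-1))"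
proof -
  have A: "\<And>n. (2 * Dl * fps_deriv Gf) $ n = 2 * ((Dl * fps_deriv Gf) $ n)"
    by (simp only: mult_2 distrib_right fps_add_nth)
  have B: "\<And>n. (fps_deriv Dl * (Gf - 1)) $ n = - 2 * (1 + aa) * (Gf - 1) $ n + (if n = 0 then 0 else 2 * (1 - aa)^2 * (Gf - 1) $ (n - 1))"
    by (simp add: Dl_deriv distrib_right mult.assoc fps_X_mult_nth)
  have E: "\<And>n. (2 * Dl * fps_deriv Gf) $ n = (fps_deriv Dl * (Gf - 1)) $ n" using Gf_ode by simp
  have e0: "2 * Gf $ 1 = 2 * (1 + aa)"
    using E[of 0] unfolding A B Dl_mult_nth by (simp add: Gf0)
  then show g1: "Gf $ 1 = 1 + aa" by simp
  have e1: "2 * (of_nat 2 * Gf $ 2 - 2 * (1 + aa) * Gf $ 1) = - 2 * (1 + aa) * Gf $ 1 + 2 * (1 - aa)^2 * (- 1)"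
    using E[of 1] unfolding A B Dl_mult_nth by (simp add: Gf0 numeral_2_eq_2)
  then have "4 * Gf $ 2 = 2 * (1 + aa) * (1 + aa) - 2 * (1 - aa)^2"
    unfolding g1 by (simp add: algebra_simps)
  also have "\<dots> = 4 * (2 * aa)" by (simp add: power2_eq_square algebra_simps)
  finally have "4 * Gf $ 2 = 4 * (2 * aa)" .
  then show "Gf $ 2 = 2 * aa" by (rule mult_left_cancel[THEN iffD1, rotated]) simp
  fix n :: nat assume n: "n \<ge> 2"
  have "2 * (of_nat (n+1) * Gf $ (n+1) - 2 * (1 + aa) * (of_nat n * Gf $ n) + (1 - aa)^2 * (of_nat (n-1) * Gf $ (n-1)))
     = - 2 * (1 + aa) * Gf $ n + 2 * (1 - aa)^2 * Gf $ (n - 1)"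
    using E[of n] n unfolding A B Dl_mult_nth by (simp add: algebra_simps Suc_diff_Suc numeral_2_eq_2)
  moreover have "(of_nat (n-1) :: real poly) = of_nat (n-2) + 1" "(of_nat n :: real poly) = of_nat (n-2) + 2"
    "(of_nat (2*n-1) :: real poly) = 2 * of_nat (n-2) + 3" using n by (simp_all add: of_nat_diff)
  ultimately show "of_nat (n+1) * Gf $ (n+1) = (1 + aa) * (of_nat (2*n-1) * Gf $ n) - (1 - aa)^2 * (of_nat (n-2) * Gf $ (n-1))"
    by (simp add: algebra_simps)
qed

definition cc :: "nat \<Rightarrow> nat \<Rightarrow> int \<Rightarrow> real" where
  "cc k n j = cI ((Gf ^ Suc k) $ n) j"

lemma cI_2: "cI (2 * p) j = 2 * cI p j" by (rule cI_num)

lemma cI_one: "cI 1 j = (if j = 0 then 1 else 0)"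
  by (simp add: cI_def)

lemma cc0_base: "n \<ge> 2 \<Longrightarrow> cc 0 n j = Fx 0 (int n) j"
proof (induction n arbitrary: j rule: less_induct)
  case (less n)
  have g2: "cc 0 2 j = 2 * g0 2 j" for j
  proof -
    have "cc 0 2 j = 2 * cI 1 (j - 1)"
      unfolding cc_def using Gf_coeffs(2) cI_2[of "aa * 1" j] cI_aa[of 1 j] by simp
    moreover consider "j \<le> 0" | "j = 1" | "j \<ge> 2" by linarith
    then have "2 * cI 1 (j - 1) = 2 * g0 2 j"
      by cases (auto simp: cI_one g0_def rf_def nf_def)
    ultimately show ?thesis by simp
  qed
  show ?case
  proof (cases "n \<le> 3")
    case True
    then consider "n = 2" | "n = 3" using less.prems by linarith
    then show ?thesis
    proof cases
      case 1
      then show ?thesis using g2 by (simp add: Fx0)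
    next
      case 2
      have "of_nat 3 * Gf $ 3 = (1 + aa) * (of_nat 3 * Gf $ 2)"
        using Gf_coeffs(3)[of 2] by (simp add: numeral_3_eq_3)
      then have "cI (of_nat 3 * Gf $ 3) j = cI ((1 + aa) * (of_nat 3 * Gf $ 2)) j" by (rule arg_cong)
      then have "3 * cc 0 3 j = 3 * (cc 0 2 j + cc 0 2 (j-1))"
        unfolding cI_1a_nat cI_smult_nat cc_def by simp
      then have "cc 0 3 j = 2 * g0 2 j + 2 * g0 2 (j-1)" using g2 by simp
      moreover consider "j \<le> 0" | "j = 1" | "j = 2" | "j \<ge> 3" by linarith
      then have "g0 2 j + g0 2 (j-1) = g0 3 j"
        by cases (auto simp: g0_def rf_def nf_def)
      ultimately show ?thesis using 2 by (simp add: Fx0)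
    qed
  next
    case False
    then have n4: "n \<ge> 4" by simp
    have r: "of_nat n * Gf $ n = (1 + aa) * (of_nat (2*n-3) * Gf $ (n-1)) - (1 - aa)^2 * (of_nat (n-3) * Gf $ (n-2))"
    proof -
      have "of_nat (n-1+1) * Gf $ (n-1+1) = (1 + aa) * (of_nat (2*(n-1)-1) * Gf $ (n-1)) - (1 - aa)^2 * (of_nat (n-1-2) * Gf $ (n-1-1))"
        by (rule Gf_coeffs(3)) (use n4 in simp)
      moreover have "n-1+1 = n" "2*(n-1)-1 = 2*n-3" "n-1-2 = n-3" "n-1-1 = n-2" using n4 by simp_all
      ultimately show ?thesis by simp
    qed
    have rc: "of_nat n * cc 0 n j = of_nat (2*n-3) * (cc 0 (n-1) j + cc 0 (n-1) (j-1))
       - of_nat (n-3) * (cc 0 (n-2) j - 2 * cc 0 (n-2) (j-1) + cc 0 (n-2) (j-2))"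
      using arg_cong[OF r, of "\<lambda>p. cI p j"] unfolding cI_diff cI_1a_nat cI_1a2_nat cI_smult_nat cc_def
      by simp
    have h1: "cc 0 (n-1) i = 2 * g0 (int n - 1) i" for i
      using less.IH[of "n-1" i] n4 by (simp add: Fx0 of_nat_diff)
    have h2: "cc 0 (n-2) i = 2 * g0 (int n - 2) i" for i
      using less.IH[of "n-2" i] n4 by (simp add: Fx0 of_nat_diff)
    have g: "of_int (int n) * g0 (int n) j = of_int (2*int n-3) * (g0 (int n-1) j + g0 (int n-1) (j-1))
     - of_int (int n-3) * (g0 (int n-2) j - 2 * g0 (int n-2) (j-1) + g0 (int n-2) (j-2))"
      by (rule g0_rec) (use n4 in simp)
    have c1: "(of_nat (2*n-3) :: real) = of_int (2*int n-3)" "(of_nat (n-3) :: real) = of_int (int n-3)"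
      "(of_nat n :: real) = of_int (int n)" using n4 by (simp_all add: of_nat_diff)
    have "of_nat n * cc 0 n j = of_int (2*int n-3) * (2 * g0 (int n-1) j + 2 * g0 (int n-1) (j-1))
       - of_int (int n-3) * (2 * g0 (int n-2) j - 2 * (2 * g0 (int n-2) (j-1)) + 2 * g0 (int n-2) (j-2))"
      by (simp only: rc h1 h2 c1(1) c1(2))
    also have "\<dots> = 2 * (of_int (2*int n-3) * (g0 (int n-1) j + g0 (int n-1) (j-1))
     - of_int (int n-3) * (g0 (int n-2) j - 2 * g0 (int n-2) (j-1) + g0 (int n-2) (j-2)))"
      by algebra
    also have "\<dots> = of_nat n * (2 * g0 (int n) j)" by (simp only: g[symmetric] c1(3))
    finally show ?thesis using n4 by (simp add: Fx0)
  qed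
qed

lemma G2: "Gf^2 = 2 * Gf - 1 + Dl"
  unfolding Gf_sq[symmetric] by algebra

lemma Gf_pow_rec:
  assumes "n \<ge> 2"
  shows "(Gf ^ (k+3)) $ n = 2 * (Gf ^ (k+2)) $ n - 2 * (1 + aa) * (Gf ^ (k+1)) $ (n - 1)
     + (1 - aa)^2 * (Gf ^ (k+1)) $ (n - 2)"
proof -
  have kk: "k + 3 = (k+1) + 2" by simp
  have "Gf ^ (k+3) = Gf ^ (k+1) * Gf^2" by (simp only: kk power_add)
  also have "\<dots> = 2 * (Gf ^ (k+1) * Gf) - Gf ^ (k+1) + Dl * Gf ^ (k+1)"
    unfolding G2 by algebra
  also have "Gf ^ (k+1) * Gf = Gf ^ (k+2)" by (simp add: power_Suc2)
  finally have e: "Gf ^ (k+3) = 2 * Gf ^ (k+2) - Gf ^ (k+1) + Dl * Gf ^ (k+1)" .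
  have dn: "(Dl * Gf ^ (k+1)) $ n = (Gf ^ (k+1)) $ n - 2 * (1 + aa) * (Gf ^ (k+1)) $ (n - 1)
     + (1 - aa)^2 * (Gf ^ (k+1)) $ (n - 2)"
    using assms by (simp only: Dl_mult_nth) simp
  have "(Gf ^ (k+3)) $ n = ((Gf ^ (k+2)) $ n + (Gf ^ (k+2)) $ n) - (Gf ^ (k+1)) $ n + (Dl * Gf ^ (k+1)) $ n"
    by (simp only: e fps_add_nth fps_sub_nth mult_2)
  then show ?thesis unfolding dn by algebra
qed

lemma Gf_pow1:
  assumes "n \<ge> 3"
  shows "(Gf ^ 2) $ n = 2 * Gf $ n"
proof -
  have "(Gf ^ 2) $ n = (Gf $ n + Gf $ n) - 1 $ n + Dl $ n"
    by (simp only: G2 fps_add_nth fps_sub_nth mult_2)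
  moreover have "1 $ n = (0::real poly)" "Dl $ n = 0" using assms by (simp_all add: Dl_nth)
  ultimately show ?thesis by (simp only: mult_2 diff_zero add_0_right)
qed

lemma cc_main: "(\<forall>n j. k + 2 \<le> n \<longrightarrow> cc k n j = Fx k (int n) j) \<and>
                (\<forall>n j. k + 3 \<le> n \<longrightarrow> cc (Suc k) n j = Fx (Suc k) (int n) j)"
proof (induction k)
  case 0
  have a: "\<forall>n j. 2 \<le> n \<longrightarrow> cc 0 n j = Fx 0 (int n) j" using cc0_base by simp
  have "cc 1 n j = Fx 1 (int n) j" if "3 \<le> n" for n j
  proof -
    have "(Gf ^ Suc 1) $ n = 2 * Gf $ n" using Gf_pow1[OF that] by (simp only: Suc_1)
    then have "cc 1 n j = 2 * cc 0 n j"
      unfolding cc_def using cI_2[of "Gf $ n" j] by simp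
    then show ?thesis using a that Fx1[of "int n" j] by simp
  qed
  then show ?case using a by simp
next
  case (Suc k)
  have "cc (k+2) n j = Fx (k+2) (int n) j" if "k + 4 \<le> n" for n j
  proof -
    have r: "(Gf ^ (k+3)) $ n = 2 * (Gf ^ (k+2)) $ n - 2 * (1 + aa) * (Gf ^ (k+1)) $ (n - 1)
     + (1 - aa)^2 * (Gf ^ (k+1)) $ (n - 2)" by (rule Gf_pow_rec) (use that in simp)
    have r2: "(Gf ^ (k+3)) $ n = 2 * (Gf ^ (k+2)) $ n - (1 + aa) * (of_nat 2 * (Gf ^ (k+1)) $ (n - 1))
     + (1 - aa)^2 * (Gf ^ (k+1)) $ (n - 2)"
    proof -
      have e2: "2 * (1 + aa) * X = (1 + aa) * (of_nat 2 * X)" for X :: "real poly" by (simp add: algebra_simps)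
      show ?thesis using r by (simp only: e2)
    qed
    have "cc (k+2) n j = 2 * cc (k+1) n j - 2 * (cc k (n-1) j + cc k (n-1) (j-1))
       + (cc k (n-2) j - 2 * cc k (n-2) (j-1) + cc k (n-2) (j-2))"
    proof -
      have "cc (k+2) n j = cI ((Gf ^ (k+3)) $ n) j" by (simp add: cc_def numeral_3_eq_3)
      also have "\<dots> = 2 * cI ((Gf ^ (k+2)) $ n) j - 2 * (cI ((Gf ^ (k+1)) $ (n - 1)) j + cI ((Gf ^ (k+1)) $ (n - 1)) (j - 1))
         + (cI ((Gf ^ (k+1)) $ (n - 2)) j - 2 * cI ((Gf ^ (k+1)) $ (n - 2)) (j - 1) + cI ((Gf ^ (k+1)) $ (n - 2)) (j - 2))"
        unfolding r2 cI_add cI_diff cI_2 cI_1a_nat cI_1a2 by simp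
      also have "\<dots> = 2 * cc (k+1) n j - 2 * (cc k (n-1) j + cc k (n-1) (j-1))
       + (cc k (n-2) j - 2 * cc k (n-2) (j-1) + cc k (n-2) (j-2))"
        by (simp add: cc_def numeral_2_eq_2)
      finally show ?thesis .
    qed
    moreover have "cc (k+1) n i = Fx (k+1) (int n) i" for i
    proof -
      have "Suc k + 2 \<le> n" using that by simp
      then show ?thesis using conjunct2[OF Suc.IH] by simp
    qed
    moreover have "cc k (n-1) i = Fx k (int n - 1) i" "cc k (n-2) i = Fx k (int n - 2) i" for i
    proof -
      have a: "k + 2 \<le> n - 1" "k + 2 \<le> n - 2" using that by simp_all
      have b: "int (n - 1) = int n - 1" "int (n - 2) = int n - 2" using that by simp_all
      have P0: "\<forall>n j. k + 2 \<le> n \<longrightarrow> cc k n j = Fx k (int n) j" using Suc.IH by blast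
      show "cc k (n-1) i = Fx k (int n - 1) i"
        using P0[rule_format, of "n-1" i] a b by simp
      show "cc k (n-2) i = Fx k (int n - 2) i"
        using P0[rule_format, of "n-2" i] a b by simp
    qed
    moreover have "Fx (k+2) (int n) j = 2 * Fx (k+1) (int n) j - 2 * Fx k (int n-1) j - 2 * Fx k (int n-1) (j-1)
     + Fx k (int n-2) j - 2 * Fx k (int n-2) (j-1) + Fx k (int n-2) (j-2)"
      by (rule Fx_rec) (use that in simp)
    ultimately show ?thesis by simp
  qed
  then have "\<forall>n j. Suc k + 3 \<le> n \<longrightarrow> cc (Suc (Suc k)) n j = Fx (Suc (Suc k)) (int n) j"
    by (simp add: numeral_2_eq_2)
  moreover have "\<forall>n j. Suc k + 2 \<le> n \<longrightarrow> cc (Suc k) n j = Fx (Suc k) (int n) j"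
    using conjunct2[OF Suc.IH] by (metis add_Suc_shift numeral_2_eq_2 numeral_3_eq_3)
  ultimately show ?case by blast
qed


lemma binom_rf: "a \<ge> 0 \<Longrightarrow> binom a b = nf a * rf b * rf (a - b)"
proof -
  assume a: "a \<ge> 0"
  show ?thesis
  proof (cases "b < 0 \<or> b > a")
    case True
    then show ?thesis by (auto simp: binom_def rf_def)
  next
    case False
    then have "nat b \<le> nat a" by (metis nat_mono not_less)
    then have "real (nat a choose nat b) = fact (nat a) / (fact (nat b) * fact (nat a - nat b))"
      by (simp add: binomial_fact)
    moreover have "nat a - nat b = nat (a - b)" using False by (simp add: nat_diff_distrib)
    ultimately show ?thesis using False a by (simp add: binom_def rf_def nf_def)
  qed
qed

lemma nf_pos: "nf x > 0" by (simp add: nf_def)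
lemma rf_pos: "x \<ge> 0 \<Longrightarrow> rf x > 0" by (simp add: rf_def)

lemma term_eq:
  fixes n r k i :: nat
  assumes "n \<ge> 2" "1 \<le> r" "k \<le> n - 2" "i \<le> k div 2"
  shows "2 * (real k + 1) / real r * ((-1) ^ i *
       (binom (int k) (int i) * binom (int k - int i) (int i) *
        binom (int n - int i - 2) (int r - 1) * binom (int n - int i - 1) (int r - int i - 1))
       / binom (int n - int i - 2) (int i))
     = 2 * fact (k+1) * rf (int r) * rf (int n - int r) * Aterm k (int n) (int r) i"
proof -
  define I where "I = int i"
  define K where "K = int k"
  define N where "N = int n"
  define R where "R = int r"
  have hI: "2*I \<le> K" using assms(4) by (simp add: I_def K_def)
  have hK: "K \<le> N - 2" using assms(1,3) by (simp add: K_def N_def)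
  have hI0: "I \<ge> 0" by (simp add: I_def)
  have hR: "R \<ge> 1" using assms(2) by (simp add: R_def)
  have b1: "binom K I = nf K * rf I * rf (K - I)" by (rule binom_rf) (use hI hI0 in simp)
  have b2: "binom (K - I) I = nf (K - I) * rf I * rf (K - 2*I)"
    using binom_rf[of "K - I" I] hI hI0 by (simp add: algebra_simps)
  have b3: "binom (N - I - 2) (R - 1) = nf (N - I - 2) * rf (R - 1) * rf (N - R - I - 1)"
    using binom_rf[of "N - I - 2" "R - 1"] hI hI0 hK by (simp add: algebra_simps)
  have b4: "binom (N - I - 1) (R - I - 1) = nf (N - I - 1) * rf (R - I - 1) * rf (N - R)"
    using binom_rf[of "N - I - 1" "R - I - 1"] hI hI0 hK by (simp add: algebra_simps)
  have b5: "binom (N - I - 2) I = nf (N - I - 2) * rf I * rf (N - 2*I - 2)"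
    using binom_rf[of "N - I - 2" "I"] hI hI0 hK by (simp add: algebra_simps)
  have r1: "rf (R - 1) = of_int R * rf R" by (rule rf_pred') simp
  have ki: "nf (K - I) * rf (K - I) = 1" using rf_nf[of "K - I"] hI hI0 by (simp add: mult.commute)
  have ii: "nf I * rf I = 1" using rf_nf[of I] hI0 by (simp add: mult.commute)
  have nn: "nf (N - 2*I - 2) * rf (N - 2*I - 2) = 1" using rf_nf[of "N - 2*I - 2"] hI hK by (simp add: mult.commute)
  have fk: "fact (k+1) = (real k + 1) * nf K"
    by (simp add: K_def nf_def)
  have pos: "nf (N - I - 2) > 0" "rf I > 0" "rf (N - 2*I - 2) > 0"
    using nf_pos rf_pos hI0 hI hK by auto
  have Rpos: "real r > 0" using assms(2) by simp
  have A: "Aterm k N R i = (-1)^i * (nf (N - I - 1) * nf (N - 2*I - 2) * rf I * rf (K - 2*I) * rf (R - I - 1) * rf (N - R - I - 1))"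
    by (simp add: Aterm_def I_def K_def)
  define Z where "Z = nf K * rf I * rf I * rf (K - 2*I) * nf (N - I - 2) * rf (R - 1) * rf (N - R - I - 1)
     * nf (N - I - 1) * rf (R - I - 1) * rf (N - R)"
  define Y where "Y = nf K * rf (K - 2*I) * rf (R - 1) * rf (N - R - I - 1) * nf (N - I - 1) * rf (R - I - 1)
     * rf (N - R) * rf I * nf (N - 2*I - 2)"
  have X1: "binom K I * binom (K - I) I * binom (N - I - 2) (R - 1) * binom (N - I - 1) (R - I - 1)
     = (nf (K - I) * rf (K - I)) * Z"
    unfolding b1 b2 b3 b4 Z_def by (simp only: mult_ac)
  have X2: "binom (N - I - 2) I * Y = (nf (N - 2*I - 2) * rf (N - 2*I - 2)) * Z"
    unfolding b5 Y_def Z_def by (simp only: mult_ac)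
  have X5: "binom (N - I - 2) I \<noteq> 0" unfolding b5 using pos nf_pos[of "N - I - 2"] by simp
  have Q: "binom K I * binom (K - I) I * binom (N - I - 2) (R - 1) * binom (N - I - 1) (R - I - 1)
       / binom (N - I - 2) I = Y"
  proof -
    have "binom K I * binom (K - I) I * binom (N - I - 2) (R - 1) * binom (N - I - 1) (R - I - 1)
       = (nf (K - I) * rf (K - I)) * Z" by (rule X1)
    also have "\<dots> = (nf (N - 2*I - 2) * rf (N - 2*I - 2)) * Z" by (simp only: ki nn)
    also have "\<dots> = binom (N - I - 2) I * Y" by (rule X2[symmetric])
    finally have "binom K I * binom (K - I) I * binom (N - I - 2) (R - 1) * binom (N - I - 1) (R - I - 1)
       = binom (N - I - 2) I * Y" .
    then show ?thesis using X5 by simp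
  qed
  have "2 * (real k + 1) / real r * ((-1) ^ i *
       (binom K I * binom (K - I) I * binom (N - I - 2) (R - 1) * binom (N - I - 1) (R - I - 1))
       / binom (N - I - 2) I)
     = 2 * (real k + 1) / real r * ((-1) ^ i * Y)"
  proof -
    have "(-1) ^ i * (binom K I * binom (K - I) I * binom (N - I - 2) (R - 1) * binom (N - I - 1) (R - I - 1))
       / binom (N - I - 2) I = (-1) ^ i * ((binom K I * binom (K - I) I * binom (N - I - 2) (R - 1) * binom (N - I - 1) (R - I - 1))
       / binom (N - I - 2) I)" by (rule times_divide_eq_right[symmetric])
    then show ?thesis unfolding Q by simp
  qed
  also have "\<dots> = 2 * (real k + 1) / real r * ((-1) ^ i * (real r * (rf R * (nf K * rf (K - 2*I) * rf (N - R - I - 1) * nf (N - I - 1) * rf (R - I - 1)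
     * rf (N - R) * rf I * nf (N - 2*I - 2)))))"
    unfolding Y_def r1 by (simp add: R_def mult_ac)
  also have "\<dots> = 2 * (real k + 1) * ((-1) ^ i * (rf R * (nf K * rf (K - 2*I) * rf (N - R - I - 1) * nf (N - I - 1) * rf (R - I - 1)
     * rf (N - R) * rf I * nf (N - 2*I - 2))))"
    using Rpos by simp
  also have "\<dots> = 2 * fact (k+1) * rf R * rf (N - R) * Aterm k N R i"
    unfolding A fk by (simp only: mult_ac)
  finally have "2 * (real k + 1) / real r * ((-1) ^ i *
       (binom K I * binom (K - I) I * binom (N - I - 2) (R - 1) * binom (N - I - 1) (R - I - 1))
       / binom (N - I - 2) I)
     = 2 * fact (k+1) * rf R * rf (N - R) * Aterm k N R i" .
  then show ?thesis by (simp add: I_def K_def N_def R_def)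
qed


definition cntT :: "bool list \<Rightarrow> nat" where "cntT s = length (filter id s)"
definition vt :: "bool list \<Rightarrow> nat \<Rightarrow> int \<times> int" where
  "vt s t = (int (cntT (take t s)), int t - int (cntT (take t s)))"
definition verts :: "bool list \<Rightarrow> (int \<times> int) list" where
  "verts s = map (vt s) [0..<Suc (length s)]"
definition stp :: "(int \<times> int) list \<Rightarrow> nat \<Rightarrow> bool list" where
  "stp P n = map (\<lambda>i. fst (P ! Suc i) - fst (P ! i) = 1) [0..<n]"

lemma cntT_take_Suc: "t < length s \<Longrightarrow> cntT (take (Suc t) s) = cntT (take t s) + (if s ! t then 1 else 0)"
  by (simp add: cntT_def take_Suc_conv_app_nth)

lemma vt_Suc: "t < length s \<Longrightarrow> vt s (Suc t) = (if s ! t then (fst (vt s t) + 1, snd (vt s t)) else (fst (vt s t), snd (vt s t) + 1))"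
  by (simp add: vt_def cntT_take_Suc)

lemma vt_sum: "fst (vt s t) + snd (vt s t) = int t"
  by (simp add: vt_def)

lemma lp_verts:
  assumes "lattice_path n r P"
  shows "P = verts (stp P n)" "length (stp P n) = n" "cntT (stp P n) = r"
proof -
  define s where "s = stp P n"
  have lP: "length P = n + 1" and P0: "P ! 0 = (0, 0)" and Pn: "P ! n = (int r, int n - int r)"
    and st: "\<And>i. i < n \<Longrightarrow> (fst (P ! Suc i) - fst (P ! i), snd (P ! Suc i) - snd (P ! i)) \<in> {(1, 0), (0, 1)}"
    using assms by (auto simp: lattice_path_def)
  have ls: "length s = n" by (simp add: s_def stp_def)
  have V: "t \<le> n \<Longrightarrow> P ! t = vt s t" for t
  proof (induction t)
    case 0
    then show ?case by (simp add: P0 vt_def cntT_def)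
  next
    case (Suc t)
    then have t: "t < n" by simp
    have IH: "P ! t = vt s t" using Suc by simp
    have si: "s ! t = (fst (P ! Suc t) - fst (P ! t) = 1)" using t by (simp add: s_def stp_def)
    from st[OF t] consider "fst (P ! Suc t) - fst (P ! t) = 1" "snd (P ! Suc t) - snd (P ! t) = 0"
      | "fst (P ! Suc t) - fst (P ! t) = 0" "snd (P ! Suc t) - snd (P ! t) = 1" by auto
    then show ?case
    proof cases
      case 1
      then show ?thesis using vt_Suc[of t s] ls t si IH by (cases "P ! Suc t") auto
    next
      case 2
      then show ?thesis using vt_Suc[of t s] ls t si IH by (cases "P ! Suc t") auto
    qed
  qed
  show "P = verts (stp P n)"
    unfolding s_def[symmetric] verts_def
    by (rule nth_equalityI) (use lP ls V in \<open>auto simp: nth_append simp del: upt_Suc\<close>)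
  show "length (stp P n) = n" by (simp add: stp_def)
  have "vt s n = (int r, int n - int r)" using V[of n] Pn by simp
  then show "cntT (stp P n) = r" using ls by (simp add: vt_def s_def[symmetric])
qed

lemma verts_lp:
  assumes "length s = n" "cntT s = r"
  shows "lattice_path n r (verts s)" "stp (verts s) n = s"
proof -
  have vn: "t \<le> n \<Longrightarrow> verts s ! t = vt s t" for t
    using assms(1) by (simp add: verts_def nth_map_upt del: upt_Suc)
  show "lattice_path n r (verts s)"
    unfolding lattice_path_def
  proof (intro conjI allI impI)
    show "length (verts s) = n + 1" using assms by (simp add: verts_def)
    show "verts s ! 0 = (0, 0)" using vn[of 0] by (simp add: vt_def cntT_def)
    show "verts s ! n = (int r, int n - int r)" using vn[of n] assms by (simp add: vt_def)
    fix i assume i: "i < n"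
    show "(fst (verts s ! Suc i) - fst (verts s ! i), snd (verts s ! Suc i) - snd (verts s ! i)) \<in> {(1, 0), (0, 1)}"
      using vn[of i] vn[of "Suc i"] vt_Suc[of i s] i assms(1) by auto
  qed
  show "stp (verts s) n = s"
  proof (rule nth_equalityI)
    show "length (stp (verts s) n) = length s" using assms by (simp add: stp_def)
    fix i assume "i < length (stp (verts s) n)"
    then have i: "i < n" by (simp add: stp_def)
    show "stp (verts s) n ! i = s ! i"
      using vn[of i] vn[of "Suc i"] vt_Suc[of i s] i assms(1) by (auto simp: stp_def)
  qed
qed

lemma set_verts: "set (verts s) = vt s ` {0..length s}"
  by (auto simp: verts_def atLeastAtMost_upt)

lemma cntT_zip_take: "length s1 = length s2 \<Longrightarrow>
   zat (zip s1 s2) t \<longleftrightarrow> cntT (take t s1) = cntT (take t s2)"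
  by (simp add: zat_def take_zip cf_zip cs_zip cntT_def)

lemma inter_card:
  assumes "length s1 = n" "length s2 = n" "cntT s1 = r" "cntT s2 = r" "n \<ge> 1"
  shows "card ((set (verts s1) \<inter> set (verts s2)) - {(0, 0), (int r, int n - int r)}) = Zc (zip s1 s2)"
proof -
  have e: "(set (verts s1) \<inter> set (verts s2)) - {(0, 0), (int r, int n - int r)}
      = vt s1 ` {t \<in> {1..<n}. cntT (take t s1) = cntT (take t s2)}"
  proof (intro set_eqI iffI)
    fix p assume p: "p \<in> (set (verts s1) \<inter> set (verts s2)) - {(0, 0), (int r, int n - int r)}"
    then obtain t1 t2 where t: "t1 \<le> n" "t2 \<le> n" "p = vt s1 t1" "p = vt s2 t2"
      using assms by (auto simp: set_verts)
    have "int t1 = int t2" using vt_sum[of s1 t1] vt_sum[of s2 t2] t by simp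
    then have tt: "t1 = t2" by simp
    have c: "cntT (take t1 s1) = cntT (take t1 s2)" using t tt by (simp add: vt_def)
    have "t1 \<noteq> 0"
    proof
      assume "t1 = 0"
      then have "p = (0, 0)" using t(3) by (simp add: vt_def cntT_def)
      then show False using p by simp
    qed
    moreover have "t1 \<noteq> n"
    proof
      assume "t1 = n"
      then have "p = (int r, int n - int r)" using t(3) assms(1,3) by (simp add: vt_def)
      then show False using p by simp
    qed
    ultimately have "t1 \<in> {t \<in> {1..<n}. cntT (take t s1) = cntT (take t s2)}"
      using t(1) c by simp
    then show "p \<in> vt s1 ` {t \<in> {1..<n}. cntT (take t s1) = cntT (take t s2)}"
      using t(3) by (rule rev_image_eqI)
  next
    fix p assume "p \<in> vt s1 ` {t \<in> {1..<n}. cntT (take t s1) = cntT (take t s2)}"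
    then obtain t where t: "1 \<le> t" "t < n" "cntT (take t s1) = cntT (take t s2)" "p = vt s1 t" by auto
    have p2: "p = vt s2 t" using t by (simp add: vt_def)
    have "p \<in> set (verts s1)" using t assms by (auto simp: set_verts)
    moreover have "p \<in> set (verts s2)" unfolding set_verts p2 using t assms by (intro imageI) simp
    moreover have "p \<noteq> (0, 0)" "p \<noteq> (int r, int n - int r)"
      using vt_sum[of s1 t] t by auto
    ultimately show "p \<in> (set (verts s1) \<inter> set (verts s2)) - {(0, 0), (int r, int n - int r)}" by auto
  qed
  have inj: "inj_on (vt s1) {t \<in> {1..<n}. cntT (take t s1) = cntT (take t s2)}"
  proof (rule inj_onI)
    fix x y assume xy: "vt s1 x = vt s1 y"
    have "int x = fst (vt s1 x) + snd (vt s1 x)" by (rule vt_sum[symmetric])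
    also have "\<dots> = fst (vt s1 y) + snd (vt s1 y)" by (simp only: xy)
    also have "\<dots> = int y" by (rule vt_sum)
    finally have "int x = int y" .
    then show "x = y" by simp
  qed
  have "card ((set (verts s1) \<inter> set (verts s2)) - {(0, 0), (int r, int n - int r)})
      = card {t \<in> {1..<n}. cntT (take t s1) = cntT (take t s2)}"
    unfolding e using inj by (rule card_image)
  also have "\<dots> = Zc (zip s1 s2)"
    unfolding Zc_def using assms by (simp add: cntT_zip_take)
  finally show ?thesis .
qed

lemma N_paths_card:
  assumes "n \<ge> 1"
  shows "N_paths k n r = card {xs \<in> Ev n. Zc xs = k \<and> cf xs = r}"
proof -
  let ?A = "{(P, Q). lattice_path n r P \<and> lattice_path n r Q \<and>
      card ((set P \<inter> set Q) - {(0, 0), (int r, int n - int r)}) = k}"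
  let ?B = "{xs \<in> Ev n. Zc xs = k \<and> cf xs = r}"
  have "bij_betw (\<lambda>(P, Q). zip (stp P n) (stp Q n)) ?A ?B"
  proof (rule bij_betw_imageI)
    show "inj_on (\<lambda>(P, Q). zip (stp P n) (stp Q n)) ?A"
    proof (rule inj_onI)
      fix x y assume x: "x \<in> ?A" and y: "y \<in> ?A" and e: "(\<lambda>(P, Q). zip (stp P n) (stp Q n)) x = (\<lambda>(P, Q). zip (stp P n) (stp Q n)) y"
      obtain P Q where xe: "x = (P, Q)" by (cases x)
      obtain P' Q' where ye: "y = (P', Q')" by (cases y)
      have h: "lattice_path n r P" "lattice_path n r Q" "lattice_path n r P'" "lattice_path n r Q'"
        using x y xe ye by auto
      have z: "zip (stp P n) (stp Q n) = zip (stp P' n) (stp Q' n)" using e xe ye by simp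
      have "stp P n = stp P' n" "stp Q n = stp Q' n"
        using z lp_verts(2)[OF h(1)] lp_verts(2)[OF h(2)] lp_verts(2)[OF h(3)] lp_verts(2)[OF h(4)]
        by (metis zip_eq_conv)+
      then have "P = P'" "Q = Q'" using lp_verts(1) h by metis+
      then show "x = y" using xe ye by simp
    qed
  next
    show "(\<lambda>(P, Q). zip (stp P n) (stp Q n)) ` ?A = ?B"
    proof (intro set_eqI iffI)
      fix xs assume "xs \<in> (\<lambda>(P, Q). zip (stp P n) (stp Q n)) ` ?A"
      then obtain P Q where h: "lattice_path n r P" "lattice_path n r Q"
        "card ((set P \<inter> set Q) - {(0, 0), (int r, int n - int r)}) = k"
        and xs: "xs = zip (stp P n) (stp Q n)" by auto
      note l1 = lp_verts[OF h(1)] and l2 = lp_verts[OF h(2)]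
      have "Zc xs = k"
        using inter_card[OF l1(2) l2(2) l1(3) l2(3) assms] h(3) l1(1) l2(1) xs by simp
      moreover have "cf xs = r" "cs xs = r" "length xs = n"
        using xs l1 l2 by (simp_all add: cf_zip cs_zip cntT_def)
      ultimately show "xs \<in> ?B" by (simp add: Ev_def)
    next
      fix xs assume xs: "xs \<in> ?B"
      define s1 where "s1 = map fst xs"
      define s2 where "s2 = map snd xs"
      have ls: "length s1 = n" "length s2 = n" using xs by (auto simp: s1_def s2_def Ev_def)
      have cs: "cntT s1 = r" "cntT s2 = r"
        using xs by (auto simp: s1_def s2_def Ev_def cntT_def cf_def cs_def filter_map comp_def)
      have zx: "zip s1 s2 = xs" by (simp add: s1_def s2_def zip_map_fst_snd)
      note v1 = verts_lp[OF ls(1) cs(1)] and v2 = verts_lp[OF ls(2) cs(2)]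
      have "card ((set (verts s1) \<inter> set (verts s2)) - {(0, 0), (int r, int n - int r)}) = k"
        using inter_card[OF ls cs assms] zx xs by simp
      then have "(verts s1, verts s2) \<in> ?A" using v1 v2 by simp
      moreover have "xs = (\<lambda>(P, Q). zip (stp P n) (stp Q n)) (verts s1, verts s2)"
        using v1 v2 zx by simp
      ultimately show "xs \<in> (\<lambda>(P, Q). zip (stp P n) (stp Q n)) ` ?A" by blast
    qed
  qed
  then have "card ?A = card ?B" by (rule bij_betw_same_card)
  then show ?thesis by (simp add: N_paths_def)
qed


theorem mainTheorem2:
  fixes n r k :: nat
  assumes "n \<ge> 2" and "1 \<le> r" and "r \<le> n" and "k \<le> n - 2"
  shows "real (N_paths k n r) =
    2 * (real k + 1) / real r *
    (\<Sum>i = 0..k div 2. (-1) ^ i *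
       (binom (int k) (int i) * binom (int k - int i) (int i) *
        binom (int n - int i - 2) (int r - 1) * binom (int n - int i - 1) (int r - int i - 1))
       / binom (int n - int i - 2) (int i))"
proof -
  have n1: "n \<ge> 1" using assms(1) by simp
  have "real (N_paths k n r) = real (card {xs \<in> Ev n. Zc xs = k \<and> cf xs = r})"
    using N_paths_card[OF n1] by simp
  also have "\<dots> = coeff (W k n) r" by (simp add: coeff_W)
  also have "\<dots> = coeff ((Gf ^ Suc k) $ n) r" using W_power[OF n1] by simp
  also have "\<dots> = cc k n (int r)" by (simp add: cc_def cI_def)
  also have "\<dots> = Fx k (int n) (int r)"
    using conjunct1[OF cc_main[of k]] assms by simp
  also have "\<dots> = (\<Sum>i = 0..k div 2. 2 * fact (k+1) * rf (int r) * rf (int n - int r) * Aterm k (int n) (int r) i)"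
    by (simp add: Fx_def Sk_def sum_distrib_left)
  also have "\<dots> = (\<Sum>i = 0..k div 2. 2 * (real k + 1) / real r * ((-1) ^ i *
       (binom (int k) (int i) * binom (int k - int i) (int i) *
        binom (int n - int i - 2) (int r - 1) * binom (int n - int i - 1) (int r - int i - 1))
       / binom (int n - int i - 2) (int i)))"
    by (rule sum.cong[OF refl], rule term_eq[symmetric]) (use assms in auto)
  also have "\<dots> = 2 * (real k + 1) / real r *
    (\<Sum>i = 0..k div 2. (-1) ^ i *
       (binom (int k) (int i) * binom (int k - int i) (int i) *
        binom (int n - int i - 2) (int r - 1) * binom (int n - int i - 1) (int r - int i - 1))
       / binom (int n - int i - 2) (int i))"
    by (simp add: sum_distrib_left)
  finally show ?thesis .
qed

end
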